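(* Work in max-plus algebra. For $k=1,2,\ldots$ let \[ \bm{A}(k)=\begin{pmatrix}\alpha_k&\bm{T}_{12}(k)\\ \bm{0}&\bm{D}\end{pmatrix}, \] where $\alpha_k$ are i.i.d. real random variables with finite expected value and variance, $\bm{T}_{12}(k)$ is a random row vector, $\bm{0}$ is a column of $-\infty$ entries, and $\bm{D}$ is a constant (nonrandom) square matrix with no entries equal to $-\infty$. Let $\bm{T}(k)$ be the matrix equal to $\bm{A}(k)$ in the position of $\bm{T}_{12}(k)$ and $-\infty$ elsewhere, and assume the random variables $\|\bm{T}(k)\|$ (the maximum entry of $\bm{T}_{12}(k)$), $k=1,2,\ldots$, are i.i.d. with nonnegative expectation and finite variance. Assume the random entries of $\bm{A}(1),\bm{A}(2),\ldots$ are i.i.d. across $k$. Let $\mu_1=\mathsf{E}\alpha_1\ge0$ and $\mu_2=\rho(\bm{D})>0$. Then the Lyapunov exponent of the system $\bm{x}(k)=\bm{A}^{T}(k)\bm{x}(k-1)$, $\bm{x}(0)=\bm{1}$, namely \[ \lambda=\lim_{k\to\infty}\|\bm{A}_k\|^{1/k}=\lim_{k\to\infty}\frac1k\,\mathsf{E}\|\bm{A}_k\|,\qquad \bm{A}_k=\bm{A}(1)\cdots\bm{A}(k), \] equals $\lambda=\mu_1\oplus\mu_2=\max(\mu_1,\mu_2)$.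
   Context: Max-plus algebra is $(\mathbb{R}\cup\{-\infty\},\oplus=\max,\otimes=+)$ with zero $-\infty$ and identity $0$; matrix products are $(\bm{A}\bm{C})_{ij}=\max_k(a_{ik}+c_{kj})$ and powers $\bm{D}^{m}$ are taken in this sense. $\bm{1}$ is the vector of all zeros. The norm $\|\bm{A}\|$ of a matrix is its maximum entry; $\|\bm{A}_k\|^{1/k}$ means $\|\bm{A}_k\|/k$. The spectral radius of an $n\times n$ matrix $\bm{D}$ is $\rho(\bm{D})=\max_{1\le m\le n}\frac1m\max_{1\le i\le n}(\bm{D}^{m})_{ii}$, i.e. the maximum mean weight of a cycle. Note $\bm{x}(k)=\bm{A}_k^{T}\bm{x}(0)$ so $\max_i x_i(k)=\|\bm{A}_k\|$. *)

theory Defs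
  imports "HOL-Probability.Probability"
begin

text \<open>Max-plus algebra over ereal (only the value -\<infinity> is used as the
  max-plus zero; entries are never +\<infinity>).  Square matrices of size N are
  represented as functions nat \<Rightarrow> nat \<Rightarrow> ereal with indices < N.\<close>

definition mp_mult :: "nat \<Rightarrow> (nat \<Rightarrow> nat \<Rightarrow> ereal) \<Rightarrow> (nat \<Rightarrow> nat \<Rightarrow> ereal) \<Rightarrow> nat \<Rightarrow> nat \<Rightarrow> ereal" where
  "mp_mult N A C = (\<lambda>i j. Max ((\<lambda>l. A i l + C l j) ` {..<N}))"

definition mp_id :: "nat \<Rightarrow> nat \<Rightarrow> ereal" where
  "mp_id = (\<lambda>i j. if i = j then 0 else -\<infinity>)"

fun mp_pow :: "nat \<Rightarrow> (nat \<Rightarrow> nat \<Rightarrow> ereal) \<Rightarrow> nat \<Rightarrow> nat \<Rightarrow> nat \<Rightarrow> ereal" where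
  "mp_pow N D 0 = mp_id"
| "mp_pow N D (Suc m) = mp_mult N (mp_pow N D m) D"

definition mp_norm :: "nat \<Rightarrow> (nat \<Rightarrow> nat \<Rightarrow> ereal) \<Rightarrow> ereal" where
  "mp_norm N A = Max {A i j | i j. i < N \<and> j < N}"

definition mp_rho :: "nat \<Rightarrow> (nat \<Rightarrow> nat \<Rightarrow> ereal) \<Rightarrow> ereal" where
  "mp_rho N D = Max ((\<lambda>m. Max ((\<lambda>i. mp_pow N D m i i) ` {..<N}) / ereal (real m)) ` {1..N})"

text \<open>The matrix A(k) of size n+1: index 0 is the alpha-row/column,
  indices 1..n carry the block D; T k j is the (0, j+1) entry.\<close>
definition Amat :: "nat \<Rightarrow> (nat \<Rightarrow> nat \<Rightarrow> real) \<Rightarrow> real \<Rightarrow> (nat \<Rightarrow> ereal) \<Rightarrow> nat \<Rightarrow> nat \<Rightarrow> ereal" where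
  "Amat n D a t = (\<lambda>i j. if i = 0 \<and> j = 0 then ereal a
                         else if i = 0 then t (j - 1)
                         else if j = 0 then -\<infinity>
                         else ereal (D (i - 1) (j - 1)))"

fun mp_prod :: "nat \<Rightarrow> (nat \<Rightarrow> nat \<Rightarrow> nat \<Rightarrow> ereal) \<Rightarrow> nat \<Rightarrow> nat \<Rightarrow> nat \<Rightarrow> ereal" where
  "mp_prod N Aseq 0 = mp_id"
| "mp_prod N Aseq (Suc k) = mp_mult N (mp_prod N Aseq k) (Aseq (Suc k))"

end

theory Submission
  imports Defs "HOL-Library.Discrete_Functions"
begin

fun rp :: "nat \<Rightarrow> (nat \<Rightarrow> nat \<Rightarrow> real) \<Rightarrow> nat \<Rightarrow> nat \<Rightarrow> nat \<Rightarrow> real" where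
  "rp n D 0 = D"
| "rp n D (Suc k) = (\<lambda>i j. Max ((\<lambda>l. rp n D k i l + D l j) ` {..<n}))"

lemma mp_pow_rp:
  assumes "n \<ge> 1" "i < n"
  shows "mp_pow n (\<lambda>i j. ereal (D i j)) (Suc k) i j = ereal (rp n D k i j)"
proof (induction k arbitrary: j)
  case 0
  have "Max ((\<lambda>l. mp_id i l + ereal (D l j)) ` {..<n}) = ereal (D i j)"
    by (rule Max_eqI) (use assms in \<open>auto simp: mp_id_def\<close>)
  then show ?case by (simp add: mp_mult_def)
next
  case (Suc k)
  have "mp_pow n (\<lambda>i j. ereal (D i j)) (Suc (Suc k)) i j
     = Max ((\<lambda>l. ereal (rp n D k i l + D l j)) ` {..<n})"
    using Suc by (simp add: mp_mult_def)
  also have "\<dots> = Max (ereal ` ((\<lambda>l. rp n D k i l + D l j) ` {..<n}))"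
    by (simp add: image_image)
  also have "\<dots> = ereal (Max ((\<lambda>l. rp n D k i l + D l j) ` {..<n}))"
    by (rule mono_Max_commute[symmetric]) (use assms in \<open>auto simp: mono_def lessThan_empty_iff\<close>)
  finally show ?case by simp
qed

definition wt :: "(nat \<Rightarrow> nat \<Rightarrow> real) \<Rightarrow> (nat \<Rightarrow> nat) \<Rightarrow> nat \<Rightarrow> real" where
  "wt D p k = (\<Sum>l<k. D (p l) (p (Suc l)))"

lemma wt_Suc: "wt D p (Suc k) = wt D p k + D (p k) (p (Suc k))"
  by (simp add: wt_def)

lemma walk_le:
  "(\<forall>l\<le>Suc k. p l < n) \<Longrightarrow> wt D p (Suc k) \<le> rp n D k (p 0) (p (Suc k))"
proof (induction k)
  case 0
  then show ?case by (simp add: wt_def)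
next
  case (Suc k)
  have "wt D p (Suc (Suc k)) = wt D p (Suc k) + D (p (Suc k)) (p (Suc (Suc k)))"
    by (rule wt_Suc)
  also have "\<dots> \<le> rp n D k (p 0) (p (Suc k)) + D (p (Suc k)) (p (Suc (Suc k)))"
    using Suc by simp
  also have "\<dots> \<le> rp n D (Suc k) (p 0) (p (Suc (Suc k)))"
    using Suc.prems by (auto intro!: Max_ge)
  finally show ?case .
qed

lemma walk_ex:
  assumes "i < n" "j < n"
  shows "\<exists>p. (\<forall>l\<le>Suc k. p l < n) \<and> p 0 = i \<and> p (Suc k) = j \<and> wt D p (Suc k) = rp n D k i j"
  using assms(2)
proof (induction k arbitrary: j)
  case 0
  show ?case
    by (rule exI[of _ "\<lambda>l. if l = 0 then i else j"]) (use assms 0 in \<open>auto simp: wt_def\<close>)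
next
  case (Suc k)
  have "rp n D (Suc k) i j \<in> (\<lambda>l. rp n D k i l + D l j) ` {..<n}"
    unfolding rp.simps by (rule Max_in) (use assms in auto)
  then obtain l0 where l0: "l0 < n" "rp n D (Suc k) i j = rp n D k i l0 + D l0 j" by auto
  obtain p where p: "\<forall>l\<le>Suc k. p l < n" "p 0 = i" "p (Suc k) = l0" "wt D p (Suc k) = rp n D k i l0"
    using Suc.IH[OF l0(1)] by blast
  define q where "q = p(Suc (Suc k) := j)"
  have "wt D q (Suc k) = wt D p (Suc k)"
    unfolding wt_def q_def by (rule sum.cong) auto
  then have "wt D q (Suc (Suc k)) = rp n D (Suc k) i j"
    using p l0 by (simp add: wt_Suc q_def)
  moreover have "\<forall>l\<le>Suc (Suc k). q l < n" using p Suc.prems by (auto simp: q_def le_Suc_eq)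
  moreover have "q 0 = i" "q (Suc (Suc k)) = j" using p by (auto simp: q_def)
  ultimately show ?case by blast
qed


lemma wt_split: "wt D p (x + y) = wt D p x + wt D (\<lambda>t. p (x + t)) y"
  by (induction y) (simp_all add: wt_def)

lemma wt_cong: "(\<And>t. t \<le> x \<Longrightarrow> p t = q t) \<Longrightarrow> wt D p x = wt D q x"
  unfolding wt_def by (rule sum.cong) auto

lemma rp_super:
  assumes "i < n" "l < n" "j < n"
  shows "rp n D a i l + rp n D b l j \<le> rp n D (Suc (a + b)) i j"
proof -
  obtain p where p: "\<forall>t\<le>Suc a. p t < n" "p 0 = i" "p (Suc a) = l" "wt D p (Suc a) = rp n D a i l"
    using walk_ex[OF assms(1,2)] by blast
  obtain q where q: "\<forall>t\<le>Suc b. q t < n" "q 0 = l" "q (Suc b) = j" "wt D q (Suc b) = rp n D b l j"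
    using walk_ex[OF assms(2,3)] by blast
  define r where "r t = (if t \<le> Suc a then p t else q (t - Suc a))" for t
  have sh: "(\<lambda>t. r (Suc a + t)) = q"
    using p q by (auto simp: r_def fun_eq_iff)
  have "wt D r (Suc a + Suc b) = wt D r (Suc a) + wt D q (Suc b)"
    using wt_split[of D r "Suc a" "Suc b"] sh by simp
  also have "wt D r (Suc a) = wt D p (Suc a)"
    by (rule wt_cong) (auto simp: r_def)
  finally have w: "wt D r (Suc (Suc (a + b))) = rp n D a i l + rp n D b l j"
    using p q by simp
  have "\<forall>t\<le>Suc (Suc (a + b)). r t < n"
    using p q by (auto simp: r_def)
  from walk_le[OF this, of D] w have "rp n D a i l + rp n D b l j \<le> rp n D (Suc (a + b)) (r 0) (r (Suc (Suc (a + b))))"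
    by simp
  moreover have "r 0 = i" "r (Suc (Suc (a + b))) = j" using p q by (auto simp: r_def)
  ultimately show ?thesis by simp
qed

lemma rp_shift:
  assumes "n \<ge> 1"
  shows "rp n (\<lambda>i j. D i j - c) k i j = rp n D k i j - real (Suc k) * c"
proof (induction k arbitrary: j)
  case 0
  then show ?case by simp
next
  case (Suc k)
  have "rp n (\<lambda>i j. D i j - c) (Suc k) i j
      = Max ((\<lambda>x. x - real (Suc (Suc k)) * c) ` ((\<lambda>l. rp n D k i l + D l j) ` {..<n}))"
  proof -
    have "(\<lambda>l. rp n (\<lambda>i j. D i j - c) k i l + (D l j - c)) = (\<lambda>l. (rp n D k i l + D l j) - real (Suc (Suc k)) * c)"
      using Suc.IH by (auto simp: fun_eq_iff algebra_simps)
    note eq = this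
    show ?thesis by (simp only: rp.simps image_image eq)
  qed
  also have "\<dots> = Max ((\<lambda>l. rp n D k i l + D l j) ` {..<n}) - real (Suc (Suc k)) * c"
    by (rule mono_Max_commute[symmetric]) (use assms in \<open>auto simp: mono_def lessThan_empty_iff\<close>)
  finally show ?case by simp
qed

lemma cyc_bound:
  assumes cyc: "\<forall>m<n. \<forall>i<n. rp n B m i i \<le> 0"
  shows "(\<forall>l\<le>Suc k. p l < n) \<Longrightarrow> wt B p (Suc k) \<le> Max ((\<lambda>m. rp n B m (p 0) (p (Suc k))) ` {..<n})"
proof (induction k arbitrary: p rule: less_induct)
  case (less k)
  show ?case
  proof (cases "k < n")
    case True
    have "wt B p (Suc k) \<le> rp n B k (p 0) (p (Suc k))" using walk_le[OF less.prems] .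
    also have "\<dots> \<le> Max ((\<lambda>m. rp n B m (p 0) (p (Suc k))) ` {..<n})"
      using True by (intro Max_ge) auto
    finally show ?thesis .
  next
    case False
    have "\<not> inj_on p {..n}"
    proof
      assume inj: "inj_on p {..n}"
      have "p ` {..n} \<subseteq> {..<n}" using less.prems False by auto
      then have "card (p ` {..n}) \<le> n" using card_mono[of "{..<n}"] by fastforce
      moreover have "card (p ` {..n}) = Suc n" using card_image[OF inj] by simp
      ultimately show False by simp
    qed
    then obtain a b where ab0: "a \<le> n" "b \<le> n" "a \<noteq> b" "p a = p b"
      unfolding inj_on_def by auto
    obtain a b where ab: "a < b" "b \<le> n" "p a = p b"
    proof (cases "a < b")
      case True then show ?thesis using ab0 that by auto
    next
      case False then show ?thesis using ab0 that[of b a] by auto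
    qed
    define c where "c = b - a"
    obtain c' where c': "c = Suc c'" using ab unfolding c_def by (cases "b - a") auto
    have cn: "c' < n" using ab c' unfolding c_def by auto
    define k' where "k' = k - c"
    have kk': "k' < k" "Suc k' = Suc k - c" using ab False c' unfolding k'_def c_def by auto
    define p' where "p' t = (if t \<le> a then p t else p (t + c))" for t
    have p'0: "p' 0 = p 0" by (simp add: p'_def)
    have p'end: "p' (Suc k') = p (Suc k)" using kk' ab False unfolding p'_def c_def by auto
    have p'walk: "\<forall>l\<le>Suc k'. p' l < n" using less.prems kk' unfolding p'_def c_def by auto
    have IH: "wt B p' (Suc k') \<le> Max ((\<lambda>m. rp n B m (p 0) (p (Suc k))) ` {..<n})"
      using less.IH[OF kk'(1) p'walk] p'0 p'end by simp
    have cyc_w: "wt B (\<lambda>t. p (a + t)) c \<le> 0"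
    proof -
      have "\<forall>l\<le>Suc c'. p (a + l) < n" using less.prems ab False c' unfolding c_def by auto
      from walk_le[OF this, of B] have "wt B (\<lambda>t. p (a + t)) c \<le> rp n B c' (p a) (p a)"
        using ab c' unfolding c_def
        by (metis add_Suc_right add_diff_inverse_nat add_0_right not_less_iff_gr_or_eq)
      also have "\<dots> \<le> 0" using cyc cn less.prems ab False by auto
      finally show ?thesis .
    qed
    have e1: "Suc k = a + (c + (Suc k - b))" using ab False unfolding c_def by auto
    have "wt B p (Suc k) = wt B p a + (wt B (\<lambda>t. p (a + t)) c + wt B (\<lambda>t. p (b + t)) (Suc k - b))"
      apply (subst e1)
      apply (subst wt_split)
      apply (subst wt_split)
      using ab unfolding c_def by (simp add: add.assoc)
    moreover have "wt B p' (Suc k') = wt B p a + wt B (\<lambda>t. p (b + t)) (Suc k - b)"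
    proof -
      have e2: "Suc k' = a + (Suc k - b)" using kk' ab False unfolding c_def by auto
      have "wt B p' (Suc k') = wt B p' a + wt B (\<lambda>t. p' (a + t)) (Suc k - b)"
        by (subst e2, rule wt_split)
      moreover have "wt B p' a = wt B p a" by (rule wt_cong) (simp add: p'_def)
      moreover have "(\<lambda>t. p' (a + t)) = (\<lambda>t. p (b + t))"
        using ab unfolding p'_def c_def by (auto simp: fun_eq_iff add.commute)
      ultimately show ?thesis by simp
    qed
    ultimately show ?thesis using IH cyc_w by linarith
  qed
qed


lemma ne_lt: "(1::nat) \<le> n \<Longrightarrow> {..<n} \<noteq> {}"
  by (metis lessThan_iff less_le_trans zero_less_one empty_iff)

definition rhor :: "nat \<Rightarrow> (nat \<Rightarrow> nat \<Rightarrow> real) \<Rightarrow> real" where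
  "rhor n D = Max ((\<lambda>m. Max ((\<lambda>i. rp n D m i i) ` {..<n}) / real (Suc m)) ` {..<n})"

lemma mp_rho_eq:
  assumes "n \<ge> 1"
  shows "mp_rho n (\<lambda>i j. ereal (D i j)) = ereal (rhor n D)"
proof -
  have ne: "{..<n} \<noteq> {}" using ne_lt[OF assms] .
  have inner: "Max ((\<lambda>i. mp_pow n (\<lambda>i j. ereal (D i j)) (Suc m) i i) ` {..<n}) / ereal (real (Suc m))
        = ereal (Max ((\<lambda>i. rp n D m i i) ` {..<n}) / real (Suc m))" for m
  proof -
    have "(\<lambda>i. mp_pow n (\<lambda>i j. ereal (D i j)) (Suc m) i i) ` {..<n} = ereal ` ((\<lambda>i. rp n D m i i) ` {..<n})"
      using mp_pow_rp[OF assms] by (auto simp: image_image)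
    then have "Max ((\<lambda>i. mp_pow n (\<lambda>i j. ereal (D i j)) (Suc m) i i) ` {..<n}) = ereal (Max ((\<lambda>i. rp n D m i i) ` {..<n}))"
      using mono_Max_commute[of ereal "(\<lambda>i. rp n D m i i) ` {..<n}"] ne by (simp add: mono_def)
    then show ?thesis by simp
  qed
  have "mp_rho n (\<lambda>i j. ereal (D i j))
      = Max ((\<lambda>m. Max ((\<lambda>i. mp_pow n (\<lambda>i j. ereal (D i j)) m i i) ` {..<n}) / ereal (real m)) ` (Suc ` {..<n}))"
    unfolding mp_rho_def by (simp add: image_Suc_lessThan)
  also have "\<dots> = Max (ereal ` ((\<lambda>m. Max ((\<lambda>i. rp n D m i i) ` {..<n}) / real (Suc m)) ` {..<n}))"
    by (simp only: image_image inner)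
  also have "\<dots> = ereal (rhor n D)"
    unfolding rhor_def using mono_Max_commute[of ereal] ne by (simp add: mono_def)
  finally show ?thesis .
qed

lemma rhor_ge:
  assumes "m < n" "i < n"
  shows "rp n D m i i \<le> real (Suc m) * rhor n D"
proof -
  have "rp n D m i i \<le> Max ((\<lambda>i. rp n D m i i) ` {..<n})" using assms by (intro Max_ge) auto
  also have "Max ((\<lambda>i. rp n D m i i) ` {..<n}) / real (Suc m) \<le> rhor n D"
    unfolding rhor_def using assms by (intro Max_ge) auto
  then have "Max ((\<lambda>i. rp n D m i i) ` {..<n}) \<le> real (Suc m) * rhor n D"
    by (simp add: divide_le_eq mult.commute)
  finally show ?thesis .
qed

lemma rhor_attained:
  assumes "n \<ge> 1"
  shows "\<exists>m<n. \<exists>i<n. rp n D m i i = real (Suc m) * rhor n D"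
proof -
  have "rhor n D \<in> (\<lambda>m. Max ((\<lambda>i. rp n D m i i) ` {..<n}) / real (Suc m)) ` {..<n}"
    unfolding rhor_def by (rule Max_in) (use ne_lt[OF assms] in auto)
  then obtain m where m: "m < n" "rhor n D = Max ((\<lambda>i. rp n D m i i) ` {..<n}) / real (Suc m)" by auto
  have "Max ((\<lambda>i. rp n D m i i) ` {..<n}) \<in> (\<lambda>i. rp n D m i i) ` {..<n}"
    by (rule Max_in) (use ne_lt[OF assms] in auto)
  then obtain i where i: "i < n" "Max ((\<lambda>i. rp n D m i i) ` {..<n}) = rp n D m i i" by auto
  show ?thesis using m i by (intro exI[of _ m] exI[of _ i]) auto
qed

lemma subeigen:
  assumes "n \<ge> 1"
  shows "\<exists>v. \<forall>l<n. \<forall>j<n. D l j + v j \<le> rhor n D + v l"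
proof -
  define r where "r = rhor n D"
  define B where "B = (\<lambda>i j. D i j - r)"
  have cyc: "\<forall>m<n. \<forall>i<n. rp n B m i i \<le> 0"
    using rhor_ge[of _ n _ D] unfolding B_def rp_shift[OF assms] r_def by auto
  define V where "V i j = Max ((\<lambda>m. rp n B m i j) ` {..<n})" for i j
  define v where "v l = Max ((\<lambda>j. V l j) ` {..<n})" for l
  have "B l j + v j \<le> v l" if lj: "l < n" "j < n" for l j
  proof -
    have "v j \<in> (\<lambda>j'. V j j') ` {..<n}" unfolding v_def by (rule Max_in) (use lj in auto)
    then obtain j' where j': "j' < n" "v j = V j j'" by auto
    have "V j j' \<in> (\<lambda>m. rp n B m j j') ` {..<n}" unfolding V_def by (rule Max_in) (use lj in auto)
    then obtain m where m: "m < n" "V j j' = rp n B m j j'" by auto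
    have "B l j + v j = rp n B 0 l j + rp n B m j j'" using j' m by simp
    also have "\<dots> \<le> rp n B (Suc m) l j'" using rp_super[OF lj j'(1), of B 0 m] by simp
    also have "\<dots> \<le> V l j'"
    proof -
      obtain p where p: "\<forall>t\<le>Suc (Suc m). p t < n" "p 0 = l" "p (Suc (Suc m)) = j'"
          "wt B p (Suc (Suc m)) = rp n B (Suc m) l j'"
        using walk_ex[OF lj(1) j'(1)] by blast
      show ?thesis using cyc_bound[OF cyc p(1)] p unfolding V_def by simp
    qed
    also have "\<dots> \<le> v l" unfolding v_def using j' by (intro Max_ge) auto
    finally show ?thesis .
  qed
  then show ?thesis unfolding B_def r_def by (intro exI[of _ v]) (auto simp: algebra_simps)
qed

lemma rp_upper:
  assumes v: "\<forall>l<n. \<forall>j<n. D l j + v j \<le> r + v l" and i: "i < n"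
  shows "j < n \<Longrightarrow> rp n D k i j + v j \<le> real (Suc k) * r + v i"
proof (induction k arbitrary: j)
  case 0
  then show ?case using v i by simp
next
  case (Suc k)
  have "Max ((\<lambda>l. rp n D k i l + D l j) ` {..<n}) \<le> real (Suc (Suc k)) * r + v i - v j"
  proof (subst Max_le_iff)
    show "\<forall>a\<in>(\<lambda>l. rp n D k i l + D l j) ` {..<n}. a \<le> real (Suc (Suc k)) * r + v i - v j"
    proof
      fix a assume "a \<in> (\<lambda>l. rp n D k i l + D l j) ` {..<n}"
      then obtain l where l: "l < n" "a = rp n D k i l + D l j" by auto
      have "rp n D k i l + v l \<le> real (Suc k) * r + v i" using Suc.IH[OF l(1)] .
      moreover have "D l j + v j \<le> r + v l" using v l Suc.prems by auto
      ultimately show "a \<le> real (Suc (Suc k)) * r + v i - v j" using l by (simp add: algebra_simps)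
    qed
  qed (use i in auto)
  then show ?case by simp
qed

lemma rp_diag_lower:
  assumes "i < n"
  shows "real (Suc k) * D i i \<le> rp n D k i i"
proof (induction k)
  case 0 then show ?case by simp
next
  case (Suc k)
  have "rp n D k i i + rp n D 0 i i \<le> rp n D (Suc k) i i" using rp_super[OF assms assms assms, of D k 0] by simp
  then show ?case using Suc by (simp add: algebra_simps)
qed

lemma rp_lower:
  assumes m0: "m0 < n" and i0: "i0 < n" and eq: "rp n D m0 i0 i0 = real (Suc m0) * r"
  shows "real (Suc k) * r - real (Suc m0) * \<bar>r - D i0 i0\<bar> \<le> rp n D k i0 i0"
proof (induction k rule: less_induct)
  case (less k)
  show ?case
  proof (cases "k \<le> m0")
    case True
    have "real (Suc k) * (r - \<bar>r - D i0 i0\<bar>) \<le> real (Suc k) * D i0 i0"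
      by (intro mult_left_mono) auto
    moreover have "real (Suc k) * \<bar>r - D i0 i0\<bar> \<le> real (Suc m0) * \<bar>r - D i0 i0\<bar>"
      using True by (intro mult_right_mono) auto
    moreover note rp_diag_lower[OF i0, of k D]
    ultimately show ?thesis by (simp add: right_diff_distrib)
  next
    case False
    define k' where "k' = k - Suc m0"
    have kk: "k' < k" "k = Suc (m0 + k')" using False unfolding k'_def by auto
    have "rp n D m0 i0 i0 + rp n D k' i0 i0 \<le> rp n D k i0 i0"
      using rp_super[OF i0 i0 i0, of D m0 k'] kk by simp
    moreover note less.IH[OF kk(1)]
    moreover have "real (Suc k) = real (Suc m0) + real (Suc k')" using kk by simp
    ultimately show ?thesis using eq by (simp add: algebra_simps)
  qed
qed


fun Rseq :: "(nat \<Rightarrow> real) \<Rightarrow> (nat \<Rightarrow> real) \<Rightarrow> real \<Rightarrow> real \<Rightarrow> nat \<Rightarrow> real" where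
  "Rseq a \<tau> r c 0 = 0"
| "Rseq a \<tau> r c (Suc k) = max ((\<Sum>l<k. a (Suc l)) + \<tau> (Suc k) + c) (Rseq a \<tau> r c k + r)"

lemma ereal_noninf_add: "(x::ereal) \<noteq> \<infinity> \<Longrightarrow> y \<noteq> \<infinity> \<Longrightarrow> x + y \<noteq> \<infinity>"
  by (cases x; cases y) auto

lemma ereal_minf_add: "(x::ereal) \<noteq> \<infinity> \<Longrightarrow> x + -\<infinity> = -\<infinity>"
  by (cases x) auto

lemma ereal_minf_add2: "(x::ereal) \<noteq> \<infinity> \<Longrightarrow> -\<infinity> + x = -\<infinity>"
  by (cases x) auto

lemma norm_set: "{A i j | i j. i < N \<and> j < N} = (\<lambda>(i, j). A i j) ` ({..<N} \<times> {..<N})"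
  by auto

locale blk =
  fixes n :: nat and D :: "nat \<Rightarrow> nat \<Rightarrow> real" and a :: "nat \<Rightarrow> real" and t :: "nat \<Rightarrow> nat \<Rightarrow> ereal"
  assumes n1: "n \<ge> 1"
    and tfin: "\<And>k j. k \<ge> 1 \<Longrightarrow> j < n \<Longrightarrow> t k j \<noteq> \<infinity>"
begin

abbreviation "Am k \<equiv> Amat n D (a k) (t k)"
abbreviation "P k \<equiv> mp_prod (Suc n) (\<lambda>k. Amat n D (a k) (t k)) k"

lemma Am_fin: "k \<ge> 1 \<Longrightarrow> j < Suc n \<Longrightarrow> Am k l j \<noteq> \<infinity>"
  using tfin by (auto simp: Amat_def)

lemma P_fin: "i < Suc n \<Longrightarrow> j < Suc n \<Longrightarrow> P k i j \<noteq> \<infinity>"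
proof (induction k arbitrary: j)
  case 0 then show ?case by (simp add: mp_id_def)
next
  case (Suc k)
  have "P (Suc k) i j \<in> (\<lambda>l. P k i l + Am (Suc k) l j) ` {..<Suc n}"
    by (simp add: mp_mult_def) (rule Max_in, auto)
  then obtain l where "l < Suc n" "P (Suc k) i j = P k i l + Am (Suc k) l j" by auto
  then show ?case using Suc Am_fin[of "Suc k" j l] ereal_noninf_add by auto
qed

lemma P00: "P k 0 0 = ereal (\<Sum>l<k. a (Suc l))"
proof (induction k)
  case 0 then show ?case by (simp add: mp_id_def)
next
  case (Suc k)
  have "Max ((\<lambda>l. P k 0 l + Am (Suc k) l 0) ` {..<Suc n}) = ereal (\<Sum>l<Suc k. a (Suc l))"
  proof (rule Max_eqI)
    fix y assume "y \<in> (\<lambda>l. P k 0 l + Am (Suc k) l 0) ` {..<Suc n}"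
    then obtain l where l: "l < Suc n" "y = P k 0 l + Am (Suc k) l 0" by auto
    show "y \<le> ereal (\<Sum>l<Suc k. a (Suc l))"
    proof (cases "l = 0")
      case True then show ?thesis using l Suc by (simp add: Amat_def)
    next
      case False then show ?thesis using l P_fin[of 0 l k] by (simp add: Amat_def ereal_minf_add)
    qed
  next
    show "ereal (\<Sum>l<Suc k. a (Suc l)) \<in> (\<lambda>l. P k 0 l + Am (Suc k) l 0) ` {..<Suc n}"
      using Suc by (intro image_eqI[of _ _ 0]) (auto simp: Amat_def)
  qed simp
  then show ?case by (simp add: mp_mult_def)
qed

lemma Pi0: "1 \<le> i \<Longrightarrow> i < Suc n \<Longrightarrow> P k i 0 = -\<infinity>"
proof (induction k)
  case 0 then show ?case by (simp add: mp_id_def)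
next
  case (Suc k)
  have "Max ((\<lambda>l. P k i l + Am (Suc k) l 0) ` {..<Suc n}) = -\<infinity>"
  proof (rule Max_eqI)
    fix y assume "y \<in> (\<lambda>l. P k i l + Am (Suc k) l 0) ` {..<Suc n}"
    then obtain l where l: "l < Suc n" "y = P k i l + Am (Suc k) l 0" by auto
    show "y \<le> -\<infinity>"
    proof (cases "l = 0")
      case True then show ?thesis using l Suc by (simp add: Amat_def)
    next
      case False then show ?thesis using l P_fin[of i l k] Suc.prems by (simp add: Amat_def ereal_minf_add)
    qed
  next
    show "-\<infinity> \<in> (\<lambda>l. P k i l + Am (Suc k) l 0) ` {..<Suc n}"
      using Suc by (intro image_eqI[of _ _ 0]) (auto simp: Amat_def)
  qed simp
  then show ?case by (simp add: mp_mult_def)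
qed

lemma Pij: "1 \<le> i \<Longrightarrow> i < Suc n \<Longrightarrow> 1 \<le> j \<Longrightarrow> j < Suc n \<Longrightarrow>
  P (Suc k) i j = ereal (rp n D k (i - 1) (j - 1))"
proof (induction k arbitrary: j)
  case 0
  have "Max ((\<lambda>l. mp_id i l + Am (Suc 0) l j) ` {..<Suc n}) = ereal (D (i - 1) (j - 1))"
  proof (rule Max_eqI)
    fix y assume "y \<in> (\<lambda>l. mp_id i l + Am (Suc 0) l j) ` {..<Suc n}"
    then obtain l where l: "l < Suc n" "y = mp_id i l + Am (Suc 0) l j" by auto
    show "y \<le> ereal (D (i - 1) (j - 1))"
    proof (cases "l = i")
      case True then show ?thesis using l 0 by (simp add: Amat_def mp_id_def)
    next
      case False then show ?thesis using l Am_fin[of 1 j l] 0 by (simp add: mp_id_def ereal_minf_add2)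
    qed
  next
    show "ereal (D (i - 1) (j - 1)) \<in> (\<lambda>l. mp_id i l + Am (Suc 0) l j) ` {..<Suc n}"
      using 0 by (intro image_eqI[of _ _ i]) (auto simp: Amat_def mp_id_def)
  qed simp
  then show ?case by (simp add: mp_mult_def)
next
  case (Suc k)
  have "Max ((\<lambda>l. P (Suc k) i l + Am (Suc (Suc k)) l j) ` {..<Suc n}) = ereal (rp n D (Suc k) (i - 1) (j - 1))"
  proof (rule Max_eqI)
    fix y assume "y \<in> (\<lambda>l. P (Suc k) i l + Am (Suc (Suc k)) l j) ` {..<Suc n}"
    then obtain l where l: "l < Suc n" "y = P (Suc k) i l + Am (Suc (Suc k)) l j" by auto
    show "y \<le> ereal (rp n D (Suc k) (i - 1) (j - 1))"
    proof (cases "l = 0")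
      case True then show ?thesis using l Suc.prems Pi0[of i "Suc k"] Am_fin[of "Suc (Suc k)" j 0]
        by (simp add: ereal_minf_add2)
    next
      case False
      then have "y = ereal (rp n D k (i - 1) (l - 1) + D (l - 1) (j - 1))"
        using l Suc.prems Suc.IH[of l] by (simp add: Amat_def)
      also have "\<dots> \<le> ereal (rp n D (Suc k) (i - 1) (j - 1))"
        unfolding ereal_less_eq rp.simps using l False by (intro Max_ge) auto
      finally show ?thesis .
    qed
  next
    have "rp n D (Suc k) (i - 1) (j - 1) \<in> (\<lambda>l. rp n D k (i - 1) l + D l (j - 1)) ` {..<n}"
      unfolding rp.simps by (rule Max_in) (use ne_lt[OF n1] in auto)
    then obtain l where l: "l < n" "rp n D (Suc k) (i - 1) (j - 1) = rp n D k (i - 1) l + D l (j - 1)" by auto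
    show "ereal (rp n D (Suc k) (i - 1) (j - 1)) \<in> (\<lambda>l. P (Suc k) i l + Am (Suc (Suc k)) l j) ` {..<Suc n}"
      using Suc.prems l Suc.IH[of "Suc l"] by (intro image_eqI[of _ _ "Suc l"]) (auto simp: Amat_def)
  qed simp
  then show ?case by (simp add: mp_mult_def)
qed


lemma P0j:
  assumes v: "\<forall>l<n. \<forall>j<n. D l j + v j \<le> r + v l"
    and vmax: "\<forall>j<n. v j \<le> c"
    and tle: "\<forall>k\<ge>1. \<forall>j<n. t k j \<le> ereal (\<tau> k)"
  shows "1 \<le> j \<Longrightarrow> j < Suc n \<Longrightarrow> P k 0 j \<le> ereal (Rseq a \<tau> r c k - v (j - 1))"
proof (induction k arbitrary: j)
  case 0 then show ?case by (simp add: mp_id_def)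
next
  case (Suc k)
  have "Max ((\<lambda>l. P k 0 l + Am (Suc k) l j) ` {..<Suc n}) \<le> ereal (Rseq a \<tau> r c (Suc k) - v (j - 1))"
  proof (rule Max.boundedI)
    fix y assume "y \<in> (\<lambda>l. P k 0 l + Am (Suc k) l j) ` {..<Suc n}"
    then obtain l where l: "l < Suc n" "y = P k 0 l + Am (Suc k) l j" by auto
    show "y \<le> ereal (Rseq a \<tau> r c (Suc k) - v (j - 1))"
    proof (cases "l = 0")
      case True
      have A0: "Am (Suc k) 0 j = t (Suc k) (j - 1)" using Suc.prems by (simp add: Amat_def)
      have "y = P k 0 0 + t (Suc k) (j - 1)" using l True A0 by simp
      then have "y = ereal (\<Sum>l<k. a (Suc l)) + t (Suc k) (j - 1)"
        by (simp only: P00)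
      also have "\<dots> \<le> ereal (\<Sum>l<k. a (Suc l)) + ereal (\<tau> (Suc k))"
        using tle Suc.prems by (intro add_left_mono) auto
      also have "\<dots> \<le> ereal (Rseq a \<tau> r c (Suc k) - v (j - 1))"
      proof -
        have "v (j - 1) \<le> c" using vmax Suc.prems by auto
        then show ?thesis by (simp only: plus_ereal.simps ereal_less_eq) auto
      qed
      finally show ?thesis .
    next
      case False
      then have "y = P k 0 l + ereal (D (l - 1) (j - 1))"
        using l Suc.prems by (simp add: Amat_def)
      also have "\<dots> \<le> ereal (Rseq a \<tau> r c k - v (l - 1)) + ereal (D (l - 1) (j - 1))"
        using Suc.IH[of l] l False by (intro add_right_mono) auto
      also have "\<dots> \<le> ereal (Rseq a \<tau> r c (Suc k) - v (j - 1))"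
      proof -
        have "D (l - 1) (j - 1) + v (j - 1) \<le> r + v (l - 1)" using v l False Suc.prems by auto
        moreover have "Rseq a \<tau> r c k + r \<le> Rseq a \<tau> r c (Suc k)" by simp
        ultimately show ?thesis by (simp only: plus_ereal.simps ereal_less_eq)
      qed
      finally show ?thesis .
    qed
  qed auto
  then show ?case by (simp add: mp_mult_def)
qed

lemma norm_bounds:
  assumes v: "\<forall>l<n. \<forall>j<n. D l j + v j \<le> r + v l"
    and vmax: "\<forall>j<n. v j \<le> c" and vmin: "\<forall>j<n. c' \<le> v j"
    and tle: "\<forall>k\<ge>1. \<forall>j<n. t k j \<le> ereal (\<tau> k)"
    and i0: "i0 < n"
  shows "mp_norm (Suc n) (P (Suc k)) \<le> ereal (max (\<Sum>l<Suc k. a (Suc l))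
            (max (real (Suc k) * r + c - c') (Rseq a \<tau> r c (Suc k) - c')))"
    and "ereal (\<Sum>l<Suc k. a (Suc l)) \<le> mp_norm (Suc n) (P (Suc k))"
    and "ereal (rp n D k i0 i0) \<le> mp_norm (Suc n) (P (Suc k))"
proof -
  let ?U = "max (\<Sum>l<Suc k. a (Suc l)) (max (real (Suc k) * r + c - c') (Rseq a \<tau> r c (Suc k) - c'))"
  have fin: "finite {P (Suc k) i j | i j. i < Suc n \<and> j < Suc n}" unfolding norm_set by auto
  show "mp_norm (Suc n) (P (Suc k)) \<le> ereal ?U"
    unfolding mp_norm_def
  proof (subst Max_le_iff[OF fin], blast, intro ballI)
    fix y assume "y \<in> {P (Suc k) i j | i j. i < Suc n \<and> j < Suc n}"
    then obtain i j where ij: "i < Suc n" "j < Suc n" "y = P (Suc k) i j" by auto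
    show "y \<le> ereal ?U"
    proof (cases "i = 0")
      case True
      show ?thesis
      proof (cases "j = 0")
        case True
        have "y = ereal (\<Sum>l<Suc k. a (Suc l))" using ij \<open>i = 0\<close> True P00[of "Suc k"] by metis
        then show ?thesis by simp
      next
        case False
        have "y \<le> ereal (Rseq a \<tau> r c (Suc k) - v (j - 1))"
          using P0j[OF v vmax tle, of j "Suc k"] ij \<open>i = 0\<close> False by simp
        also have "\<dots> \<le> ereal (Rseq a \<tau> r c (Suc k) - c')" using vmin ij False by auto
        also have "\<dots> \<le> ereal ?U" by (simp only: ereal_less_eq)
        finally show ?thesis .
      qed
    next
      case False
      show ?thesis
      proof (cases "j = 0")
        case True
        then show ?thesis using ij False Pi0[of i "Suc k"] by simp
      next
        case False2: False
        have "y = ereal (rp n D k (i - 1) (j - 1))" using ij False False2 Pij[of i j k] by simp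
        also have "\<dots> \<le> ereal ?U"
        proof -
          have "rp n D k (i - 1) (j - 1) + v (j - 1) \<le> real (Suc k) * r + v (i - 1)"
            using rp_upper[OF v, of "i - 1" "j - 1" k] ij False False2 by auto
          moreover have "v (i - 1) \<le> c" "c' \<le> v (j - 1)" using ij False False2 vmin vmax by auto
          ultimately have "rp n D k (i - 1) (j - 1) \<le> real (Suc k) * r + c - c'" by linarith
          then show ?thesis by (simp only: ereal_less_eq)
        qed
        finally show ?thesis .
      qed
    qed
  qed
  show "ereal (\<Sum>l<Suc k. a (Suc l)) \<le> mp_norm (Suc n) (P (Suc k))"
    unfolding mp_norm_def by (rule Max_ge[OF fin]) (use P00[of "Suc k"] in force)
  show "ereal (rp n D k i0 i0) \<le> mp_norm (Suc n) (P (Suc k))"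
    unfolding mp_norm_def
    by (rule Max_ge[OF fin]) (use Pij[of "Suc i0" "Suc i0" k] i0 in force)
qed

end


definition mpN :: "nat \<Rightarrow> (nat \<Rightarrow> nat \<Rightarrow> real) \<Rightarrow> (nat \<Rightarrow> real) \<Rightarrow> (nat \<Rightarrow> nat \<Rightarrow> ereal) \<Rightarrow> nat \<Rightarrow> real" where
  "mpN n D a t k = real_of_ereal (mp_norm (Suc n) (mp_prod (Suc n) (\<lambda>k. Amat n D (a k) (t k)) k))"

lemma ereal_between: "ereal x \<le> y \<Longrightarrow> y \<le> ereal z \<Longrightarrow> y = ereal (real_of_ereal y)"
  by (cases y) auto

lemma det_final:
  assumes n1: "n \<ge> 1"
  shows "\<exists>C0 c c'. \<forall>(a::nat \<Rightarrow> real) (t::nat \<Rightarrow> nat \<Rightarrow> ereal) (\<tau>::nat \<Rightarrow> real). (\<forall>k\<ge>(1::nat). \<forall>j<n. t k j \<noteq> \<infinity> \<and> t k j \<le> ereal (\<tau> k)) \<longrightarrow> (\<forall>k\<ge>(1::nat).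
     mp_norm (Suc n) (mp_prod (Suc n) (\<lambda>k. Amat n D (a k) (t k)) k) = ereal (mpN n D a t k) \<and>
     (\<Sum>l<k. a (Suc l)) \<le> mpN n D a t k \<and>
     real k * rhor n D - C0 \<le> mpN n D a t k \<and>
     mpN n D a t k \<le> max (\<Sum>l<k. a (Suc l)) (max (real k * rhor n D + c - c') (Rseq a \<tau> (rhor n D) c k - c')))"
proof -
  define r where "r = rhor n D"
  obtain v where v: "\<forall>l<n. \<forall>j<n. D l j + v j \<le> r + v l" using subeigen[OF n1] unfolding r_def by blast
  obtain m0 i0 where mi: "m0 < n" "i0 < n" "rp n D m0 i0 i0 = real (Suc m0) * r"
    using rhor_attained[OF n1] unfolding r_def by blast
  define c where "c = Max (v ` {..<n})"
  define c' where "c' = Min (v ` {..<n})"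
  have vmax: "\<forall>j<n. v j \<le> c" unfolding c_def by auto
  have vmin: "\<forall>j<n. c' \<le> v j" unfolding c'_def by auto
  define C0 where "C0 = real (Suc m0) * \<bar>r - D i0 i0\<bar>"
  have "\<forall>k\<ge>(1::nat).
     mp_norm (Suc n) (mp_prod (Suc n) (\<lambda>k. Amat n D (a k) (t k)) k) = ereal (mpN n D a t k) \<and>
     (\<Sum>l<k. a (Suc l)) \<le> mpN n D a t k \<and>
     real k * rhor n D - C0 \<le> mpN n D a t k \<and>
     mpN n D a t k \<le> max (\<Sum>l<k. a (Suc l)) (max (real k * rhor n D + c - c') (Rseq a \<tau> (rhor n D) c k - c'))"
    if tt: "\<forall>k\<ge>(1::nat). \<forall>j<n. t k j \<noteq> \<infinity> \<and> t k j \<le> ereal (\<tau> k)" for a t \<tau>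
  proof (intro allI impI)
    fix k :: nat
    assume k: "1 \<le> k"
    interpret blk n D a t using n1 tt by unfold_locales auto
    obtain k' where k': "k = Suc k'" using k by (cases k) auto
    have tle: "\<forall>k\<ge>1. \<forall>j<n. t k j \<le> ereal (\<tau> k)" using tt by auto
    note nb = norm_bounds[OF v vmax vmin tle mi(2), of k']
    have low2: "real k * r - C0 \<le> rp n D k' i0 i0"
      using rp_lower[OF mi, of k'] k' unfolding C0_def by simp
    have eq: "mp_norm (Suc n) (P k) = ereal (mpN n D a t k)"
      unfolding mpN_def using ereal_between[OF nb(2) nb(1)] k' by simp
    show "mp_norm (Suc n) (mp_prod (Suc n) (\<lambda>k. Amat n D (a k) (t k)) k) = ereal (mpN n D a t k) \<and>
     (\<Sum>l<k. a (Suc l)) \<le> mpN n D a t k \<and>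
     real k * rhor n D - C0 \<le> mpN n D a t k \<and>
     mpN n D a t k \<le> max (\<Sum>l<k. a (Suc l)) (max (real k * rhor n D + c - c') (Rseq a \<tau> (rhor n D) c k - c'))"
    proof (intro conjI)
      show "mp_norm (Suc n) (P k) = ereal (mpN n D a t k)" by (rule eq)
      have "ereal (\<Sum>l<k. a (Suc l)) \<le> ereal (mpN n D a t k)" using nb(2) eq unfolding k' by simp
      then show "(\<Sum>l<k. a (Suc l)) \<le> mpN n D a t k" by simp
      have "ereal (rp n D k' i0 i0) \<le> ereal (mpN n D a t k)" using nb(3) eq unfolding k' by simp
      then show "real k * rhor n D - C0 \<le> mpN n D a t k" using low2 unfolding r_def by simp
      have "ereal (mpN n D a t k) \<le> ereal (max (\<Sum>l<k. a (Suc l)) (max (real k * rhor n D + c - c') (Rseq a \<tau> (rhor n D) c k - c')))"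
        using nb(1) unfolding eq[unfolded k'] k' r_def by (simp only:)
      then show "mpN n D a t k \<le> max (\<Sum>l<k. a (Suc l)) (max (real k * rhor n D + c - c') (Rseq a \<tau> (rhor n D) c k - c'))"
        by (simp only: ereal_less_eq)
    qed
  qed
  then show ?thesis by blast
qed

lemma Rseq_bound:
  assumes "r \<le> lam" "mu \<le> lam" "0 \<le> lam"
  shows "Rseq a \<tau> r c k \<le> real k * lam + \<bar>c\<bar> + Max ((\<lambda>l. \<bar>(\<Sum>i<l. a (Suc i)) - real l * mu\<bar>) ` {..k})
           + Max ((\<lambda>l. \<bar>\<tau> l\<bar>) ` {..k})"
proof (induction k)
  case 0
  then show ?case by simp
next
  case (Suc k)
  let ?E = "\<lambda>k. Max ((\<lambda>l. \<bar>(\<Sum>i<l. a (Suc i)) - real l * mu\<bar>) ` {..k})"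
  let ?F = "\<lambda>k. Max ((\<lambda>l. \<bar>\<tau> l\<bar>) ` {..k})"
  have E1: "\<bar>(\<Sum>i<k. a (Suc i)) - real k * mu\<bar> \<le> ?E (Suc k)" by (intro Max_ge) auto
  have F1: "\<bar>\<tau> (Suc k)\<bar> \<le> ?F (Suc k)" by (intro Max_ge) auto
  have E2: "?E k \<le> ?E (Suc k)" by (intro Max_mono) auto
  have F2: "?F k \<le> ?F (Suc k)" by (intro Max_mono) auto
  have m: "real k * mu \<le> real k * lam" using assms by (intro mult_left_mono) auto
  have b1: "(\<Sum>l<k. a (Suc l)) + \<tau> (Suc k) + c \<le> real (Suc k) * lam + \<bar>c\<bar> + ?E (Suc k) + ?F (Suc k)"
  proof -
    have "real (Suc k) * lam = real k * lam + lam" by (simp add: algebra_simps)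
    moreover have "(\<Sum>i<k. a (Suc i)) - real k * mu \<le> \<bar>(\<Sum>i<k. a (Suc i)) - real k * mu\<bar>" by simp
    moreover have "\<tau> (Suc k) \<le> \<bar>\<tau> (Suc k)\<bar>" "c \<le> \<bar>c\<bar>" by simp_all
    ultimately show ?thesis using E1 F1 m assms by linarith
  qed
  have b2: "Rseq a \<tau> r c k + r \<le> real (Suc k) * lam + \<bar>c\<bar> + ?E (Suc k) + ?F (Suc k)"
  proof -
    have "real (Suc k) * lam = real k * lam + lam" by (simp add: algebra_simps)
    then show ?thesis using Suc E2 F2 assms by linarith
  qed
  show ?case using b1 b2 by simp
qed

lemma maxabs_o:
  fixes x :: "nat \<Rightarrow> real"
  assumes "(\<lambda>k. x k / real k) \<longlonglongrightarrow> 0"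
  shows "(\<lambda>k. Max ((\<lambda>l. \<bar>x l\<bar>) ` {..k}) / real k) \<longlonglongrightarrow> 0"
proof (rule LIMSEQ_I)
  fix e :: real assume e: "0 < e"
  obtain L where L: "\<forall>l\<ge>L. \<bar>x l / real l\<bar> < e / 2"
    using LIMSEQ_D[OF assms, of "e/2"] e by auto
  define K0 where "K0 = Max ((\<lambda>l. \<bar>x l\<bar>) ` {..L})"
  have K0: "\<And>l. l \<le> L \<Longrightarrow> \<bar>x l\<bar> \<le> K0" unfolding K0_def by (intro Max_ge) auto
  have K0nn: "0 \<le> K0" using K0[of 0] by linarith
  obtain L2 where L2: "\<forall>k\<ge>L2. \<bar>K0 / real k\<bar> < e / 2"
    using LIMSEQ_D[OF lim_const_over_n[of K0], of "e/2"] e by auto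
  show "\<exists>no. \<forall>k\<ge>no. norm (Max ((\<lambda>l. \<bar>x l\<bar>) ` {..k}) / real k - 0) < e"
  proof (intro exI[of _ "max (max L L2) 1"] allI impI)
    fix k assume k: "max (max L L2) 1 \<le> k"
    have kpos: "real k > 0" using k by auto
    let ?M = "Max ((\<lambda>l. \<bar>x l\<bar>) ` {..k})"
    have M: "?M \<le> K0 + e / 2 * real k"
    proof (rule Max.boundedI)
      fix y assume "y \<in> (\<lambda>l. \<bar>x l\<bar>) ` {..k}"
      then obtain l where l: "l \<le> k" "y = \<bar>x l\<bar>" by auto
      show "y \<le> K0 + e / 2 * real k"
      proof (cases "l \<le> L")
        case True
        have "0 \<le> e / 2 * real k" using e by simp
        then show ?thesis using K0[of l] l True by linarith
      next
        case False
        then have lpos: "real l > 0" by auto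
        have "\<bar>x l\<bar> / real l < e / 2" using L False by (simp add: abs_div)
        then have "\<bar>x l\<bar> < e / 2 * real l" using lpos by (simp add: divide_less_eq)
        also have "\<dots> \<le> e / 2 * real k" using l e by (intro mult_left_mono) auto
        finally show ?thesis using l K0nn by simp
      qed
    qed auto
    have Mnn: "0 \<le> ?M" by (rule order_trans[OF _ Max_ge[of _ "\<bar>x 0\<bar>"]]) auto
    have "?M / real k \<le> K0 / real k + e / 2"
      using M kpos by (simp add: divide_le_eq add_divide_distrib algebra_simps)
    moreover have "K0 / real k < e / 2" using L2 k K0nn kpos by auto
    moreover have "norm (?M / real k - 0) = ?M / real k" using Mnn kpos by simp
    ultimately show "norm (?M / real k - 0) < e" by linarith
  qed
qed

lemma seq_limit:
  fixes N a \<tau> :: "nat \<Rightarrow> real"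
  assumes H: "\<forall>k\<ge>1. (\<Sum>l<k. a (Suc l)) \<le> N k \<and> real k * r - C0 \<le> N k \<and>
                N k \<le> max (\<Sum>l<k. a (Suc l)) (max (real k * r + c - c') (Rseq a \<tau> r c k - c'))"
    and S: "(\<lambda>k. (\<Sum>l<k. a (Suc l)) / real k) \<longlonglongrightarrow> mu"
    and T: "(\<lambda>k. \<tau> k / real k) \<longlonglongrightarrow> 0"
    and r0: "0 \<le> r"
  shows "(\<lambda>k. N k / real k) \<longlonglongrightarrow> max mu r"
proof -
  define lam where "lam = max mu r"
  define S where "S k = (\<Sum>l<k. a (Suc l))" for k
  define Em where "Em k = Max ((\<lambda>l. \<bar>(\<Sum>i<l. a (Suc i)) - real l * mu\<bar>) ` {..k})" for k
  define Fm where "Fm k = Max ((\<lambda>l. \<bar>\<tau> l\<bar>) ` {..k})" for k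
  have Em0: "(\<lambda>k. Em k / real k) \<longlonglongrightarrow> 0"
  proof -
    have "(\<lambda>k. S k / real k - mu) \<longlonglongrightarrow> 0" using S unfolding S_def
      by (metis (no_types) LIM_zero)
    moreover have "\<forall>\<^sub>F k in sequentially. S k / real k - mu = (S k - real k * mu) / real k"
      using eventually_gt_at_top[of 0] by eventually_elim (simp add: field_simps)
    ultimately have "(\<lambda>k. (S k - real k * mu) / real k) \<longlonglongrightarrow> 0"
      using Lim_transform_eventually by fastforce
    from maxabs_o[OF this] show ?thesis unfolding Em_def S_def .
  qed
  have Fm0: "(\<lambda>k. Fm k / real k) \<longlonglongrightarrow> 0" using maxabs_o[OF T] unfolding Fm_def .
  define L where "L k = max (S k / real k) (r - C0 / real k)" for k
  define U where "U k = max (S k / real k) (max (r + (c - c') / real k)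
                     (lam + (\<bar>c\<bar> + \<bar>c'\<bar>) / real k + Em k / real k + Fm k / real k))" for k
  have "L \<longlonglongrightarrow> max mu (r - 0)" unfolding L_def S_def
    by (intro tendsto_intros S)
  then have Ll: "L \<longlonglongrightarrow> lam" unfolding lam_def by simp
  have "U \<longlonglongrightarrow> max mu (max (r + 0) (lam + 0 + 0 + 0))" unfolding U_def S_def
    by (intro tendsto_intros S Em0 Fm0)
  then have Ul: "U \<longlonglongrightarrow> lam" unfolding lam_def by simp
  show ?thesis
  proof (rule tendsto_sandwich[OF _ _ Ll[unfolded lam_def] Ul[unfolded lam_def]])
    show "\<forall>\<^sub>F k in sequentially. L k \<le> N k / real k"
      using eventually_ge_at_top[of 1]
    proof eventually_elim
      case (elim k)
      then have kp: "real k > 0" by auto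
      have "S k \<le> N k" "real k * r - C0 \<le> N k" using H elim unfolding S_def by auto
      moreover have "r - C0 / real k = (real k * r - C0) / real k" using kp by (simp add: field_simps)
      ultimately have "S k / real k \<le> N k / real k" "r - C0 / real k \<le> N k / real k"
        using kp by (auto intro: divide_right_mono)
      then show ?case unfolding L_def by simp
    qed
    show "\<forall>\<^sub>F k in sequentially. N k / real k \<le> U k"
      using eventually_ge_at_top[of 1]
    proof eventually_elim
      case (elim k)
      then have kp: "real k > 0" by auto
      have Hk: "N k \<le> max (S k) (max (real k * r + c - c') (Rseq a \<tau> r c k - c'))"
        using H elim unfolding S_def by auto
      have R: "Rseq a \<tau> r c k \<le> real k * lam + \<bar>c\<bar> + Em k + Fm k"
        unfolding Em_def Fm_def lam_def using Rseq_bound[of r "max mu r" mu a \<tau> c k] r0 by auto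
      have "Rseq a \<tau> r c k - c' \<le> real k * (lam + (\<bar>c\<bar> + \<bar>c'\<bar>) / real k + Em k / real k + Fm k / real k)"
      proof -
        have "real k * (lam + (\<bar>c\<bar> + \<bar>c'\<bar>) / real k + Em k / real k + Fm k / real k)
             = real k * lam + (\<bar>c\<bar> + \<bar>c'\<bar>) + Em k + Fm k" using kp by (simp add: field_simps)
        moreover have "- c' \<le> \<bar>c'\<bar>" by simp
        ultimately show ?thesis using R by linarith
      qed
      moreover have "real k * r + c - c' = real k * (r + (c - c') / real k)"
        using kp by (simp add: field_simps)
      moreover have "S k = real k * (S k / real k)" using kp by simp
      ultimately have "N k \<le> real k * U k"
        using Hk unfolding U_def by (smt (verit) kp mult_left_mono max.cobounded1 max.cobounded2)
      then show ?case using kp by (simp add: divide_le_eq mult.commute)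
    qed
  qed
qed

lemma floor_sqrt_at_top: "filterlim floor_sqrt at_top sequentially"
  unfolding filterlim_at_top
proof (intro allI)
  fix Z :: nat
  show "\<forall>\<^sub>F k in sequentially. Z \<le> floor_sqrt k"
    using eventually_ge_at_top[of "Z^2"] by eventually_elim (rule le_floor_sqrtI)
qed

lemma interp:
  fixes s :: "nat \<Rightarrow> real"
  assumes mono: "mono s" and nn: "\<And>k. 0 \<le> s k"
    and lim: "(\<lambda>m. s ((Suc m)^2) / real ((Suc m)^2)) \<longlonglongrightarrow> mu"
  shows "(\<lambda>k. s k / real k) \<longlonglongrightarrow> mu"
proof -
  define w where "w m = s (m^2) / real (m^2)" for m
  have w: "w \<longlonglongrightarrow> mu" unfolding w_def by (rule LIMSEQ_imp_Suc[OF lim])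
  have r1: "(\<lambda>m. (real m / real (Suc m))^2) \<longlonglongrightarrow> 1^2"
    by (intro tendsto_power LIMSEQ_n_over_Suc_n)
  have r2: "(\<lambda>m. (real (Suc m) / real m)^2) \<longlonglongrightarrow> 1^2"
    by (intro tendsto_power LIMSEQ_Suc_n_over_n)
  have l1: "(\<lambda>m. w m * (real m / real (Suc m))^2) \<longlonglongrightarrow> mu * 1"
    using tendsto_mult[OF w r1] by (simp only: power_one)
  have l2: "(\<lambda>m. w (Suc m) * (real (Suc m) / real m)^2) \<longlonglongrightarrow> mu * 1"
    using tendsto_mult[OF LIMSEQ_Suc[OF w] r2] by (simp only: power_one)
  have L: "(\<lambda>k. w (floor_sqrt k) * (real (floor_sqrt k) / real (Suc (floor_sqrt k)))^2) \<longlonglongrightarrow> mu"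
    using filterlim_compose[OF l1 floor_sqrt_at_top] by (simp only: mult_1_right)
  have U: "(\<lambda>k. w (Suc (floor_sqrt k)) * (real (Suc (floor_sqrt k)) / real (floor_sqrt k))^2) \<longlonglongrightarrow> mu"
    using filterlim_compose[OF l2 floor_sqrt_at_top] by (simp only: mult_1_right)
  show ?thesis
  proof (rule tendsto_sandwich[OF _ _ L U])
    show "\<forall>\<^sub>F k in sequentially. w (floor_sqrt k) * (real (floor_sqrt k) / real (Suc (floor_sqrt k)))^2 \<le> s k / real k"
      using eventually_ge_at_top[of 1]
    proof eventually_elim
      case (elim k)
      define q where "q = floor_sqrt k"
      have q0: "q > 0" using elim unfolding q_def by simp
      have qk: "q^2 \<le> k" "k < (Suc q)^2" unfolding q_def by (rule floor_sqrt_power2_le, rule Suc_floor_sqrt_power2_gt)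
      have kp: "real k > 0" using elim by auto
      have kq: "real k \<le> real ((Suc q)^2)" by (simp only: of_nat_le_iff) (rule less_imp_le[OF qk(2)])
      have "w q * (real q / real (Suc q))^2 = s (q^2) / real ((Suc q)^2)"
        using q0 unfolding w_def by (simp add: power_divide)
      also have "\<dots> \<le> s (q^2) / real k"
        using kq kp nn by (intro divide_left_mono) auto
      also have "\<dots> \<le> s k / real k"
        using qk kp mono by (intro divide_right_mono) (auto simp: mono_def)
      finally show ?case unfolding q_def .
    qed
    show "\<forall>\<^sub>F k in sequentially. s k / real k \<le> w (Suc (floor_sqrt k)) * (real (Suc (floor_sqrt k)) / real (floor_sqrt k))^2"
      using eventually_ge_at_top[of 1]
    proof eventually_elim
      case (elim k)
      define q where "q = floor_sqrt k"
      have q0: "q > 0" using elim unfolding q_def by simp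
      have qk: "q^2 \<le> k" "k < (Suc q)^2" unfolding q_def by (rule floor_sqrt_power2_le, rule Suc_floor_sqrt_power2_gt)
      have kp: "real k > 0" using elim by auto
      have "s k / real k \<le> s ((Suc q)^2) / real k"
        using qk kp mono by (intro divide_right_mono) (auto simp: mono_def)
      also have "\<dots> \<le> s ((Suc q)^2) / real (q^2)"
        using qk kp nn q0 by (intro divide_left_mono) auto
      also have "\<dots> = w (Suc q) * (real (Suc q) / real q)^2"
        using q0 unfolding w_def by (simp add: power_divide)
      finally show ?case unfolding q_def .
    qed
  qed
qed


context prob_space
begin

lemma ident_transfer:
  fixes g :: "'b \<Rightarrow> real"
  assumes X: "X \<in> measurable M N" and X1: "X1 \<in> measurable M N"
    and eq: "distr M N X = distr M N X1" and g: "g \<in> borel_measurable N"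
  shows "integrable M (\<lambda>x. g (X x)) \<longleftrightarrow> integrable M (\<lambda>x. g (X1 x))"
    and "(\<integral>x. g (X x) \<partial>M) = (\<integral>x. g (X1 x) \<partial>M)"
  using integrable_distr_eq[OF X g] integrable_distr_eq[OF X1 g] eq
    integral_distr[OF X g] integral_distr[OF X1 g] by auto

lemma var_sum:
  fixes Z :: "nat \<Rightarrow> 'a \<Rightarrow> real"
  assumes indep: "indep_vars (\<lambda>_. borel) Z I" and J: "finite J" "J \<subseteq> I"
    and sq: "\<And>i. i \<in> I \<Longrightarrow> integrable M (\<lambda>x. (Z i x)^2)"
    and m0: "\<And>i. i \<in> I \<Longrightarrow> expectation (Z i) = 0"
  shows "integrable M (\<lambda>x. (\<Sum>i\<in>J. Z i x)^2)"
    and "expectation (\<lambda>x. (\<Sum>i\<in>J. Z i x)^2) = (\<Sum>i\<in>J. expectation (\<lambda>x. (Z i x)^2))"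
proof -
  have meas: "Z i \<in> borel_measurable M" if "i \<in> I" for i
    using indep that unfolding indep_vars_def by auto
  have int: "integrable M (Z i)" if "i \<in> I" for i
    using square_integrable_imp_integrable[OF meas[OF that] sq[OF that]] .
  have pr: "integrable M (\<lambda>x. Z i x * Z j x) \<and>
      expectation (\<lambda>x. Z i x * Z j x) = (if i = j then expectation (\<lambda>x. (Z i x)^2) else 0)"
    if ij: "i \<in> I" "j \<in> I" for i j
  proof (cases "i = j")
    case True
    then show ?thesis using sq[OF ij(1)] by (simp add: power2_eq_square)
  next
    case False
    have ind2: "indep_vars (\<lambda>_. borel) Z {i, j}" using indep_vars_subset[OF indep] ij by auto
    have i2: "\<And>l. l \<in> {i, j} \<Longrightarrow> integrable M (Z l)" using int ij by auto
    have "integrable M (\<lambda>x. \<Prod>l\<in>{i, j}. Z l x)" by (rule indep_vars_integrable[OF _ ind2 i2]) simp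
    moreover have "expectation (\<lambda>x. \<Prod>l\<in>{i, j}. Z l x) = (\<Prod>l\<in>{i, j}. expectation (Z l))"
      by (rule indep_vars_lebesgue_integral[OF _ ind2 i2]) simp
    ultimately show ?thesis using False m0 ij by simp
  qed
  have sqsum: "(\<Sum>i\<in>J. Z i x)^2 = (\<Sum>i\<in>J. \<Sum>j\<in>J. Z i x * Z j x)" for x
    by (simp add: power2_eq_square sum_product)
  show "integrable M (\<lambda>x. (\<Sum>i\<in>J. Z i x)^2)"
    unfolding sqsum using pr J by (intro Bochner_Integration.integrable_sum) auto
  have "expectation (\<lambda>x. (\<Sum>i\<in>J. Z i x)^2) = (\<Sum>i\<in>J. expectation (\<lambda>x. \<Sum>j\<in>J. Z i x * Z j x))"
    unfolding sqsum using pr J by (intro Bochner_Integration.integral_sum Bochner_Integration.integrable_sum) auto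
  also have "\<dots> = (\<Sum>i\<in>J. \<Sum>j\<in>J. expectation (\<lambda>x. Z i x * Z j x))"
    using pr J by (intro sum.cong refl Bochner_Integration.integral_sum) auto
  also have "\<dots> = (\<Sum>i\<in>J. \<Sum>j\<in>J. (if i = j then expectation (\<lambda>x. (Z i x)^2) else 0))"
  proof (intro sum.cong refl)
    fix i j assume "i \<in> J" "j \<in> J"
    then show "expectation (\<lambda>x. Z i x * Z j x) = (if i = j then expectation (\<lambda>x. (Z i x)^2) else 0)"
      using pr[of i j] J by blast
  qed
  also have "\<dots> = (\<Sum>i\<in>J. expectation (\<lambda>x. (Z i x)^2))"
    using J by (simp add: sum.delta)
  finally show "expectation (\<lambda>x. (\<Sum>i\<in>J. Z i x)^2) = (\<Sum>i\<in>J. expectation (\<lambda>x. (Z i x)^2))" .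
qed


lemma slln_sub:
  fixes Xv :: "nat \<Rightarrow> 'a \<Rightarrow> 'b" and f :: "'b \<Rightarrow> real"
  assumes indep: "indep_vars (\<lambda>_. N) Xv {1..}"
    and ident: "\<And>k. k \<ge> 1 \<Longrightarrow> distr M N (Xv k) = distr M N (Xv 1)"
    and f[measurable]: "f \<in> borel_measurable N"
    and sq: "integrable M (\<lambda>x. (f (Xv 1 x))^2)"
  shows "AE x in M. (\<lambda>m. (\<Sum>l<(Suc m)^2. f (Xv (Suc l) x)) / real ((Suc m)^2))
           \<longlonglongrightarrow> expectation (\<lambda>x. f (Xv 1 x))"
proof -
  define \<mu> where "\<mu> = expectation (\<lambda>x. f (Xv 1 x))"
  define \<sigma>2 where "\<sigma>2 = expectation (\<lambda>x. (f (Xv 1 x) - \<mu>)^2)"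
  define Z where "Z i x = f (Xv i x) - \<mu>" for i x
  have measX: "Xv i \<in> measurable M N" if "i \<ge> 1" for i
    using indep that unfolding indep_vars_def by auto
  have measZ[measurable]: "Z i \<in> borel_measurable M" if "i \<ge> 1" for i
    unfolding Z_def using measX[OF that] by measurable
  have indepZ: "indep_vars (\<lambda>_. borel) Z {1..}"
    unfolding Z_def by (rule indep_vars_compose2[OF indep]) measurable
  have int1: "integrable M (\<lambda>x. f (Xv 1 x))"
    by (rule square_integrable_imp_integrable[OF _ sq]) (use measX[of 1] in measurable)
  have sq1: "integrable M (\<lambda>x. (f (Xv 1 x) - \<mu>)^2)"
    using sq int1 by (simp add: power2_diff)
  have sqZ: "integrable M (\<lambda>x. (Z i x)^2)" if "i \<in> {1..}" for i
    using ident_transfer(1)[OF measX[of i] measX[of 1] ident[of i], of "\<lambda>y. (f y - \<mu>)^2"] that sq1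
    unfolding Z_def by auto
  have EZ2: "expectation (\<lambda>x. (Z i x)^2) = \<sigma>2" if "i \<in> {1..}" for i
    using ident_transfer(2)[OF measX[of i] measX[of 1] ident[of i], of "\<lambda>y. (f y - \<mu>)^2"] that
    unfolding Z_def \<sigma>2_def by auto
  have m0: "expectation (Z i) = 0" if "i \<in> {1..}" for i
  proof -
    have "integrable M (\<lambda>x. f (Xv i x))"
      using ident_transfer(1)[OF measX[of i] measX[of 1] ident[of i], of f] that int1 by auto
    moreover have "expectation (\<lambda>x. f (Xv i x)) = \<mu>"
      using ident_transfer(2)[OF measX[of i] measX[of 1] ident[of i], of f] that unfolding \<mu>_def by auto
    ultimately show ?thesis unfolding Z_def by (simp add: prob_space)
  qed
  define T where "T K x = (\<Sum>i\<in>Suc ` {..<K}. Z i x)" for K x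
  have Tsub: "Suc ` {..<K} \<subseteq> {1..}" for K by auto
  have Tmeas[measurable]: "T K \<in> borel_measurable M" for K
    unfolding T_def using measZ by (intro borel_measurable_sum) auto
  have Tsq: "integrable M (\<lambda>x. (T K x)^2)" for K
    unfolding T_def by (rule var_sum(1)[OF indepZ _ Tsub sqZ m0]) auto
  have ET2: "expectation (\<lambda>x. (T K x)^2) = real K * \<sigma>2" for K
  proof -
    have "expectation (\<lambda>x. (T K x)^2) = (\<Sum>i\<in>Suc ` {..<K}. expectation (\<lambda>x. (Z i x)^2))"
      unfolding T_def by (rule var_sum(2)[OF indepZ _ Tsub sqZ m0]) auto
    also have "\<dots> = (\<Sum>i\<in>Suc ` {..<K}. \<sigma>2)" using EZ2 by (intro sum.cong) auto
    finally show ?thesis by (simp add: card_image)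
  qed
  have ET: "expectation (T K) = 0" for K
  proof -
    have "expectation (T K) = (\<Sum>i\<in>Suc ` {..<K}. expectation (Z i))"
      unfolding T_def using square_integrable_imp_integrable[OF measZ sqZ]
      by (intro Bochner_Integration.integral_sum) auto
    also have "\<dots> = 0" using m0 by (intro sum.neutral) auto
    finally show ?thesis .
  qed
  have cheb: "prob {x \<in> space M. e * real K \<le> \<bar>T K x\<bar>} \<le> \<sigma>2 / (e^2 * real K)"
    if e: "e > 0" and K: "K > 0" for e K
  proof -
    have "prob {x \<in> space M. e * real K \<le> \<bar>T K x - expectation (T K)\<bar>} \<le> variance (T K) / (e * real K)^2"
      by (rule Chebyshev_inequality[OF Tmeas Tsq]) (use e K in auto)
    also have "variance (T K) = real K * \<sigma>2" using ET ET2 by simp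
    also have "real K * \<sigma>2 / (e * real K)^2 = \<sigma>2 / (e^2 * real K)"
      using K by (simp add: power2_eq_square field_simps)
    finally show ?thesis using ET by simp
  qed
  have \<sigma>2nn: "\<sigma>2 \<ge> 0" unfolding \<sigma>2_def by (rule integral_nonneg_AE) auto
  have conv_eps: "AE x in M. \<forall>\<^sub>F m in sequentially. \<bar>T ((Suc m)^2) x\<bar> < e * real ((Suc m)^2)"
    if e: "e > 0" for e
  proof -
    define A where "A m = {x \<in> space M. e * real ((Suc m)^2) \<le> \<bar>T ((Suc m)^2) x\<bar>}" for m
    have Ameas: "A m \<in> sets M" for m unfolding A_def by measurable
    have Abound: "measure M (A m) \<le> \<sigma>2 / e^2 * inverse (real (Suc m) ^ 2)" for m
      using cheb[OF e, of "(Suc m)^2"] unfolding A_def by (simp add: field_simps)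
    have sum1: "summable (\<lambda>m. inverse (real (Suc m) ^ 2))"
      using inverse_power_summable[of 2, where 'a=real] by (subst summable_Suc_iff) simp
    have "summable (\<lambda>m. measure M (A m))"
      by (rule summable_comparison_test'[OF summable_mult[OF sum1, of "\<sigma>2 / e^2"]]) (use Abound in auto)
    from borel_cantelli_AE1[OF Ameas _ this]
    have "AE x in M. \<forall>\<^sub>F m in sequentially. x \<in> space M - A m" by (simp add: less_top[symmetric])
    then show ?thesis
      by (rule AE_mp) (auto intro!: AE_I2 elim!: eventually_mono simp: A_def)
  qed
  have "AE x in M. \<forall>j::nat. \<forall>\<^sub>F m in sequentially. \<bar>T ((Suc m)^2) x\<bar> < (1 / real (Suc j)) * real ((Suc m)^2)"
    unfolding AE_all_countable by (intro allI conv_eps) simp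
  then have "AE x in M. (\<lambda>m. T ((Suc m)^2) x / real ((Suc m)^2)) \<longlonglongrightarrow> 0"
  proof (rule AE_mp, intro AE_I2 impI)
    fix x assume H: "\<forall>j::nat. \<forall>\<^sub>F m in sequentially. \<bar>T ((Suc m)^2) x\<bar> < (1 / real (Suc j)) * real ((Suc m)^2)"
    show "(\<lambda>m. T ((Suc m)^2) x / real ((Suc m)^2)) \<longlonglongrightarrow> 0"
    proof (rule order_tendstoI)
      fix a :: real assume "a > 0"
      then obtain j where j: "1 / real (Suc j) < a"
        using reals_Archimedean[of a] by (auto simp: inverse_eq_divide)
      show "\<forall>\<^sub>F m in sequentially. T ((Suc m)^2) x / real ((Suc m)^2) < a"
        using H[rule_format, of j]
      proof eventually_elim
        case (elim m)
        have p: "real ((Suc m)^2) > 0" by simp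
        have "T ((Suc m)^2) x / real ((Suc m)^2) \<le> \<bar>T ((Suc m)^2) x\<bar> / real ((Suc m)^2)"
          using p by (intro divide_right_mono) auto
        also have "\<dots> < 1 / real (Suc j)" using elim p by (simp add: divide_less_eq)
        finally show ?case using j by simp
      qed
    next
      fix a :: real assume "a < 0"
      then obtain j where j: "1 / real (Suc j) < - a"
        using reals_Archimedean[of "-a"] by (auto simp: inverse_eq_divide)
      show "\<forall>\<^sub>F m in sequentially. a < T ((Suc m)^2) x / real ((Suc m)^2)"
        using H[rule_format, of j]
      proof eventually_elim
        case (elim m)
        have p: "real ((Suc m)^2) > 0" by simp
        have "- (T ((Suc m)^2) x / real ((Suc m)^2)) \<le> \<bar>T ((Suc m)^2) x\<bar> / real ((Suc m)^2)"
          using p divide_right_mono[of "- T ((Suc m)^2) x" "\<bar>T ((Suc m)^2) x\<bar>" "real ((Suc m)^2)"] by simp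
        also have "\<dots> < 1 / real (Suc j)" using elim p by (simp add: divide_less_eq)
        finally show ?case using j by simp
      qed
    qed
  qed
  then show ?thesis
  proof (rule AE_mp, intro AE_I2 impI)
    fix x assume "x \<in> space M" and H: "(\<lambda>m. T ((Suc m)^2) x / real ((Suc m)^2)) \<longlonglongrightarrow> 0"
    have eq: "(\<Sum>l<K. f (Xv (Suc l) x)) / real K = T K x / real K + \<mu>" if "K > 0" for K
    proof -
      have "T K x = (\<Sum>l<K. Z (Suc l) x)" unfolding T_def by (simp add: sum.reindex)
      also have "\<dots> = (\<Sum>l<K. f (Xv (Suc l) x)) - real K * \<mu>" unfolding Z_def by (simp add: sum_subtractf)
      finally show ?thesis using that by (simp add: field_simps)
    qed
    have "(\<lambda>m. T ((Suc m)^2) x / real ((Suc m)^2) + \<mu>) \<longlonglongrightarrow> 0 + \<mu>"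
      by (intro tendsto_add H tendsto_const)
    moreover have "(\<lambda>m. T ((Suc m)^2) x / real ((Suc m)^2) + \<mu>) = (\<lambda>m. (\<Sum>l<(Suc m)^2. f (Xv (Suc l) x)) / real ((Suc m)^2))"
      using eq by (intro ext) (metis zero_less_Suc zero_less_power)
    ultimately show "(\<lambda>m. (\<Sum>l<(Suc m)^2. f (Xv (Suc l) x)) / real ((Suc m)^2)) \<longlonglongrightarrow> expectation (\<lambda>x. f (Xv 1 x))"
      using eq unfolding \<mu>_def by simp
  qed
qed


lemma slln_nonneg:
  fixes Xv :: "nat \<Rightarrow> 'a \<Rightarrow> 'b" and f :: "'b \<Rightarrow> real"
  assumes indep: "indep_vars (\<lambda>_. N) Xv {1..}"
    and ident: "\<And>k. k \<ge> 1 \<Longrightarrow> distr M N (Xv k) = distr M N (Xv 1)"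
    and f[measurable]: "f \<in> borel_measurable N"
    and sq: "integrable M (\<lambda>x. (f (Xv 1 x))^2)"
    and nn: "\<And>y. 0 \<le> f y"
  shows "AE x in M. (\<lambda>k. (\<Sum>l<k. f (Xv (Suc l) x)) / real k) \<longlonglongrightarrow> expectation (\<lambda>x. f (Xv 1 x))"
proof -
  have S: "AE x in M. (\<lambda>m. (\<Sum>l<(Suc m)^2. f (Xv (Suc l) x)) / real ((Suc m)^2)) \<longlonglongrightarrow> expectation (\<lambda>x. f (Xv 1 x))"
    by (rule slln_sub[OF indep _ f sq]) (rule ident)
  from S show ?thesis
proof (rule AE_mp, intro AE_I2 impI)
  fix x
  assume H: "(\<lambda>m. (\<Sum>l<(Suc m)^2. f (Xv (Suc l) x)) / real ((Suc m)^2)) \<longlonglongrightarrow> expectation (\<lambda>x. f (Xv 1 x))"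
  show "(\<lambda>k. (\<Sum>l<k. f (Xv (Suc l) x)) / real k) \<longlonglongrightarrow> expectation (\<lambda>x. f (Xv 1 x))"
  proof (rule interp[OF _ _ H])
    show "mono (\<lambda>k. \<Sum>l<k. f (Xv (Suc l) x))"
      unfolding mono_def using nn by (auto intro!: sum_mono2)
    show "\<And>k. 0 \<le> (\<Sum>l<k. f (Xv (Suc l) x))" using nn by (auto intro!: sum_nonneg)
  qed
qed
qed

lemma slln:
  fixes Xv :: "nat \<Rightarrow> 'a \<Rightarrow> 'b" and f :: "'b \<Rightarrow> real"
  assumes indep: "indep_vars (\<lambda>_. N) Xv {1..}"
    and ident: "\<And>k. k \<ge> 1 \<Longrightarrow> distr M N (Xv k) = distr M N (Xv 1)"
    and f[measurable]: "f \<in> borel_measurable N"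
    and sq: "integrable M (\<lambda>x. (f (Xv 1 x))^2)"
  shows "AE x in M. (\<lambda>k. (\<Sum>l<k. f (Xv (Suc l) x)) / real k) \<longlonglongrightarrow> expectation (\<lambda>x. f (Xv 1 x))"
proof -
  have measX[measurable]: "Xv 1 \<in> measurable M N"
    using indep unfolding indep_vars_def by auto
  define fp where "fp y = max (f y) 0" for y
  define fn where "fn y = max (- f y) 0" for y
  have [measurable]: "fp \<in> borel_measurable N" "fn \<in> borel_measurable N"
    unfolding fp_def fn_def by measurable
  have sqp: "integrable M (\<lambda>x. (fp (Xv 1 x))^2)"
  proof (rule Bochner_Integration.integrable_bound[OF sq])
    show "(\<lambda>x. (fp (Xv 1 x))^2) \<in> borel_measurable M" by measurable
    have "\<And>a::real. (max a 0)^2 \<le> a^2" by (auto simp: max_def)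
    then show "AE x in M. norm ((fp (Xv 1 x))^2) \<le> norm ((f (Xv 1 x))^2)"
      unfolding fp_def by (intro AE_I2) simp
  qed
  have sqn: "integrable M (\<lambda>x. (fn (Xv 1 x))^2)"
  proof (rule Bochner_Integration.integrable_bound[OF sq])
    show "(\<lambda>x. (fn (Xv 1 x))^2) \<in> borel_measurable M" by measurable
    have "\<And>a::real. (max (-a) 0)^2 \<le> a^2" by (auto simp: max_def)
    then show "AE x in M. norm ((fn (Xv 1 x))^2) \<le> norm ((f (Xv 1 x))^2)"
      unfolding fn_def by (intro AE_I2) simp
  qed
  have ip: "integrable M (\<lambda>x. fp (Xv 1 x))"
    by (rule square_integrable_imp_integrable[OF _ sqp]) measurable
  have in': "integrable M (\<lambda>x. fn (Xv 1 x))"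
    by (rule square_integrable_imp_integrable[OF _ sqn]) measurable
  have fdec: "f y = fp y - fn y" for y unfolding fp_def fn_def by auto
  have Ef: "expectation (\<lambda>x. f (Xv 1 x)) = expectation (\<lambda>x. fp (Xv 1 x)) - expectation (\<lambda>x. fn (Xv 1 x))"
    unfolding fdec using ip in' by simp
  note P = slln_nonneg[OF indep _ _ sqp] and Nn = slln_nonneg[OF indep _ _ sqn]
  have P': "AE x in M. (\<lambda>k. (\<Sum>l<k. fp (Xv (Suc l) x)) / real k) \<longlonglongrightarrow> expectation (\<lambda>x. fp (Xv 1 x))"
    apply (rule P)
      apply (erule ident)
     apply measurable
    apply (simp add: fp_def)
    done
  have N': "AE x in M. (\<lambda>k. (\<Sum>l<k. fn (Xv (Suc l) x)) / real k) \<longlonglongrightarrow> expectation (\<lambda>x. fn (Xv 1 x))"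
    apply (rule Nn)
      apply (erule ident)
     apply measurable
    apply (simp add: fn_def)
    done
  show ?thesis
    using P' N'
  proof eventually_elim
    case (elim x)
    have "(\<lambda>k. (\<Sum>l<k. fp (Xv (Suc l) x)) / real k - (\<Sum>l<k. fn (Xv (Suc l) x)) / real k)
        \<longlonglongrightarrow> expectation (\<lambda>x. fp (Xv 1 x)) - expectation (\<lambda>x. fn (Xv 1 x))"
      by (intro tendsto_diff elim)
    moreover have "(\<lambda>k. (\<Sum>l<k. fp (Xv (Suc l) x)) / real k - (\<Sum>l<k. fn (Xv (Suc l) x)) / real k)
        = (\<lambda>k. (\<Sum>l<k. f (Xv (Suc l) x)) / real k)"
      unfolding fdec by (simp add: sum_subtractf diff_divide_distrib)
    ultimately show ?case unfolding Ef by simp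
  qed
qed

end

context prob_space
begin

lemma fatou_ev:
  fixes h :: "nat \<Rightarrow> 'a \<Rightarrow> real"
  assumes hi: "\<And>k. integrable M (h k)" and hn: "\<And>k. AE x in M. 0 \<le> h k x"
    and hl: "AE x in M. (\<lambda>k. h k x) \<longlonglongrightarrow> H" and e: "e > 0"
  shows "\<forall>\<^sub>F k in sequentially. H - e < (\<integral>x. h k x \<partial>M)"
proof (cases "H - e < 0")
  case True
  have "0 \<le> (\<integral>x. h k x \<partial>M)" for k by (rule integral_nonneg_AE[OF hn])
  then show ?thesis using True by (intro always_eventually allI) (metis diff_gt_0_iff_gt less_le_trans)
next
  case False
  have meas[measurable]: "h k \<in> borel_measurable M" for k using hi[of k] by auto
  have "(\<integral>\<^sup>+ x. liminf (\<lambda>k. ennreal (h k x)) \<partial>M) \<le> liminf (\<lambda>k. \<integral>\<^sup>+ x. ennreal (h k x) \<partial>M)"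
    by (rule nn_integral_liminf) measurable
  moreover have "(\<integral>\<^sup>+ x. liminf (\<lambda>k. ennreal (h k x)) \<partial>M) = (\<integral>\<^sup>+ x. ennreal H \<partial>M)"
  proof (rule nn_integral_cong_AE)
    show "AE x in M. liminf (\<lambda>k. ennreal (h k x)) = ennreal H"
      using hl by eventually_elim (rule lim_imp_Liminf, simp, rule tendsto_ennrealI)
  qed
  moreover have "(\<integral>\<^sup>+ x. ennreal H \<partial>M) = ennreal H" by (simp add: emeasure_space_1)
  moreover have "(\<lambda>k. \<integral>\<^sup>+ x. ennreal (h k x) \<partial>M) = (\<lambda>k. ennreal (\<integral>x. h k x \<partial>M))"
    by (intro ext nn_integral_eq_integral hi hn)
  ultimately have le: "ennreal H \<le> liminf (\<lambda>k. ennreal (\<integral>x. h k x \<partial>M))" by simp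
  have "ennreal (H - e) < ennreal H" using False e by (subst ennreal_less_iff) auto
  then have "ennreal (H - e) < liminf (\<lambda>k. ennreal (\<integral>x. h k x \<partial>M))" using le by (rule less_le_trans)
  from less_LiminfD[OF this] show ?thesis
    by eventually_elim (use False in \<open>simp add: ennreal_less_iff\<close>)
qed

lemma gdct:
  fixes f g :: "nat \<Rightarrow> 'a \<Rightarrow> real"
  assumes fi: "\<And>k. integrable M (f k)" and gi: "\<And>k. integrable M (g k)"
    and bound: "\<And>k. AE x in M. \<bar>f k x\<bar> \<le> g k x"
    and flim: "AE x in M. (\<lambda>k. f k x) \<longlonglongrightarrow> F"
    and glim: "AE x in M. (\<lambda>k. g k x) \<longlonglongrightarrow> G"
    and gint: "(\<lambda>k. \<integral>x. g k x \<partial>M) \<longlonglongrightarrow> G"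
  shows "(\<lambda>k. \<integral>x. f k x \<partial>M) \<longlonglongrightarrow> F"
proof (rule order_tendstoI)
  fix a assume a: "F < a"
  define e where "e = (a - F) / 2"
  have e: "e > 0" using a unfolding e_def by simp
  have h1: "\<forall>\<^sub>F k in sequentially. (G - F) - e < (\<integral>x. g k x - f k x \<partial>M)"
  proof (rule fatou_ev[OF _ _ _ e])
    show "\<And>k. integrable M (\<lambda>x. g k x - f k x)" using fi gi by auto
    show "AE x in M. 0 \<le> g k x - f k x" for k using bound[of k] by eventually_elim simp
    show "AE x in M. (\<lambda>k. g k x - f k x) \<longlonglongrightarrow> G - F"
      using flim glim by eventually_elim (intro tendsto_intros)
  qed
  have h2: "\<forall>\<^sub>F k in sequentially. (\<integral>x. g k x \<partial>M) < G + e"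
    using order_tendstoD(2)[OF gint, of "G + e"] e by simp
  show "\<forall>\<^sub>F k in sequentially. (\<integral>x. f k x \<partial>M) < a"
    using h1 h2
  proof eventually_elim
    case (elim k)
    have "(\<integral>x. g k x - f k x \<partial>M) = (\<integral>x. g k x \<partial>M) - (\<integral>x. f k x \<partial>M)"
      by (rule Bochner_Integration.integral_diff[OF gi fi])
    then show ?case using elim unfolding e_def by argo
  qed
next
  fix a assume a: "a < F"
  define e where "e = (F - a) / 2"
  have e: "e > 0" using a unfolding e_def by simp
  have h1: "\<forall>\<^sub>F k in sequentially. (G + F) - e < (\<integral>x. g k x + f k x \<partial>M)"
  proof (rule fatou_ev[OF _ _ _ e])
    show "\<And>k. integrable M (\<lambda>x. g k x + f k x)" using fi gi by auto
    show "AE x in M. 0 \<le> g k x + f k x" for k using bound[of k] by eventually_elim simp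
    show "AE x in M. (\<lambda>k. g k x + f k x) \<longlonglongrightarrow> G + F"
      using flim glim by eventually_elim (intro tendsto_intros)
  qed
  have h2: "\<forall>\<^sub>F k in sequentially. (\<integral>x. g k x \<partial>M) < G + e"
    using order_tendstoD(2)[OF gint, of "G + e"] e by simp
  show "\<forall>\<^sub>F k in sequentially. a < (\<integral>x. f k x \<partial>M)"
    using h1 h2
  proof eventually_elim
    case (elim k)
    have "(\<integral>x. g k x + f k x \<partial>M) = (\<integral>x. g k x \<partial>M) + (\<integral>x. f k x \<partial>M)"
      by (rule Bochner_Integration.integral_add[OF gi fi])
    then show ?case using elim unfolding e_def by argo
  qed
qed

end

lemma meas_Amat:
  assumes a: "a \<in> borel_measurable M" and t: "\<And>j. j < n \<Longrightarrow> (\<lambda>\<omega>. t \<omega> j) \<in> borel_measurable M"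
    and j: "j < Suc n"
  shows "(\<lambda>\<omega>. Amat n D (a \<omega>) (t \<omega>) l j) \<in> borel_measurable M"
proof (cases "l = 0")
  case True
  show ?thesis
  proof (cases "j = 0")
    case True
    then show ?thesis using \<open>l = 0\<close> a by (simp add: Amat_def)
  next
    case False
    then show ?thesis using \<open>l = 0\<close> t[of "j - 1"] j by (simp add: Amat_def)
  qed
next
  case False
  then show ?thesis by (cases "j = 0") (simp_all add: Amat_def)
qed

lemma meas_P:
  assumes a: "\<And>k. k \<ge> 1 \<Longrightarrow> (\<lambda>\<omega>. \<alpha> k \<omega>) \<in> borel_measurable M"
    and t: "\<And>k j. k \<ge> 1 \<Longrightarrow> j < n \<Longrightarrow> (\<lambda>\<omega>. T k j \<omega>) \<in> borel_measurable M"
  shows "i < Suc n \<Longrightarrow> j < Suc n \<Longrightarrow>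
    (\<lambda>\<omega>. mp_prod (Suc n) (\<lambda>k. Amat n D (\<alpha> k \<omega>) (\<lambda>j. T k j \<omega>)) k i j) \<in> borel_measurable M"
proof (induction k arbitrary: j)
  case 0
  then show ?case by simp
next
  case (Suc k)
  have A: "(\<lambda>\<omega>. Amat n D (\<alpha> (Suc k) \<omega>) (\<lambda>j. T (Suc k) j \<omega>) l j) \<in> borel_measurable M" for l
    by (rule meas_Amat[OF a t Suc.prems(2)]) auto
  have IH: "(\<lambda>\<omega>. mp_prod (Suc n) (\<lambda>k. Amat n D (\<alpha> k \<omega>) (\<lambda>j. T k j \<omega>)) k i l) \<in> borel_measurable M"
    if "l \<in> {..<Suc n}" for l
    using Suc.IH[of l] Suc.prems that by auto
  show ?case
    unfolding mp_prod.simps mp_mult_def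
    by (rule borel_measurable_Max) (auto intro!: borel_measurable_ereal_add IH A)
qed

lemma meas_norm:
  assumes a: "\<And>k. k \<ge> 1 \<Longrightarrow> (\<lambda>\<omega>. \<alpha> k \<omega>) \<in> borel_measurable M"
    and t: "\<And>k j. k \<ge> 1 \<Longrightarrow> j < n \<Longrightarrow> (\<lambda>\<omega>. T k j \<omega>) \<in> borel_measurable M"
  shows "(\<lambda>\<omega>. real_of_ereal (mp_norm (Suc n) (mp_prod (Suc n) (\<lambda>k. Amat n D (\<alpha> k \<omega>) (\<lambda>j. T k j \<omega>)) k)))
     \<in> borel_measurable M"
proof -
  have "(\<lambda>\<omega>. Max ((\<lambda>p. (\<lambda>(i, j). mp_prod (Suc n) (\<lambda>k. Amat n D (\<alpha> k \<omega>) (\<lambda>j. T k j \<omega>)) k i j) p)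
      ` ({..<Suc n} \<times> {..<Suc n}))) \<in> borel_measurable M"
    by (rule borel_measurable_Max) (auto intro!: meas_P[OF a t])
  then show ?thesis unfolding mp_norm_def norm_set by measurable
qed


lemma Rseq_abs:
  "Rseq a \<tau> r c k \<le> real k * (\<bar>r\<bar> + \<bar>c\<bar>) + (\<Sum>l<k. \<bar>a (Suc l)\<bar>) + (\<Sum>l<k. \<bar>\<tau> (Suc l)\<bar>)"
proof (induction k)
  case 0 then show ?case by simp
next
  case (Suc k)
  have s1: "(\<Sum>l<k. a (Suc l)) \<le> (\<Sum>l<k. \<bar>a (Suc l)\<bar>)" by (intro sum_mono) auto
  have s2: "0 \<le> \<bar>a (Suc k)\<bar>" by simp
  have e: "real (Suc k) * (\<bar>r\<bar> + \<bar>c\<bar>) = real k * (\<bar>r\<bar> + \<bar>c\<bar>) + \<bar>r\<bar> + \<bar>c\<bar>" by (simp add: algebra_simps)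
  have nn: "0 \<le> real k * (\<bar>r\<bar> + \<bar>c\<bar>)" "0 \<le> (\<Sum>l<k. \<bar>a (Suc l)\<bar>)" "0 \<le> (\<Sum>l<k. \<bar>\<tau> (Suc l)\<bar>)"
    by (auto intro: sum_nonneg)
  have x: "\<tau> (Suc k) \<le> \<bar>\<tau> (Suc k)\<bar>" "c \<le> \<bar>c\<bar>" "r \<le> \<bar>r\<bar>" "0 \<le> \<bar>\<tau> (Suc k)\<bar>" by auto
  have sa: "(\<Sum>l<Suc k. \<bar>a (Suc l)\<bar>) = (\<Sum>l<k. \<bar>a (Suc l)\<bar>) + \<bar>a (Suc k)\<bar>" by simp
  have st: "(\<Sum>l<Suc k. \<bar>\<tau> (Suc l)\<bar>) = (\<Sum>l<k. \<bar>\<tau> (Suc l)\<bar>) + \<bar>\<tau> (Suc k)\<bar>" by simp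
  let ?R = "real (Suc k) * (\<bar>r\<bar> + \<bar>c\<bar>) + (\<Sum>l<Suc k. \<bar>a (Suc l)\<bar>) + (\<Sum>l<Suc k. \<bar>\<tau> (Suc l)\<bar>)"
  have b1: "(\<Sum>l<k. a (Suc l)) + \<tau> (Suc k) + c \<le> ?R"
    unfolding sa st e using x s1 s2 nn by linarith
  have b2: "Rseq a \<tau> r c k + r \<le> ?R"
    unfolding sa st e using x Suc s2 nn by linarith
  show ?case using b1 b2 by simp
qed

lemma N_abs:
  assumes "(\<Sum>l<k. a (Suc l)) \<le> N"
    and "N \<le> max (\<Sum>l<k. a (Suc l)) (max (real k * r + c - c') (Rseq a \<tau> r c k - c'))"
  shows "\<bar>N\<bar> \<le> (\<Sum>l<k. \<bar>a (Suc l)\<bar>) + (\<Sum>l<k. \<bar>\<tau> (Suc l)\<bar>) + real k * (\<bar>r\<bar> + \<bar>c\<bar>) + \<bar>c\<bar> + \<bar>c'\<bar>"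
proof -
  have s1: "\<bar>\<Sum>l<k. a (Suc l)\<bar> \<le> (\<Sum>l<k. \<bar>a (Suc l)\<bar>)" by (rule sum_abs)
  have nn: "0 \<le> real k * (\<bar>r\<bar> + \<bar>c\<bar>)" "0 \<le> (\<Sum>l<k. \<bar>\<tau> (Suc l)\<bar>)" "0 \<le> (\<Sum>l<k. \<bar>a (Suc l)\<bar>)"
    by (auto intro: sum_nonneg)
  have kr: "real k * r \<le> real k * \<bar>r\<bar>" by (intro mult_left_mono) auto
  have "real k * \<bar>r\<bar> \<le> real k * (\<bar>r\<bar> + \<bar>c\<bar>)" by (intro mult_left_mono) auto
  note kc = this
  let ?B = "(\<Sum>l<k. \<bar>a (Suc l)\<bar>) + (\<Sum>l<k. \<bar>\<tau> (Suc l)\<bar>) + real k * (\<bar>r\<bar> + \<bar>c\<bar>) + \<bar>c\<bar> + \<bar>c'\<bar>"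
  have sa: "(\<Sum>l<k. a (Suc l)) \<le> (\<Sum>l<k. \<bar>a (Suc l)\<bar>)" "- (\<Sum>l<k. a (Suc l)) \<le> (\<Sum>l<k. \<bar>a (Suc l)\<bar>)"
    using s1 by linarith+
  have cc: "c \<le> \<bar>c\<bar>" "- c' \<le> \<bar>c'\<bar>" "0 \<le> \<bar>c\<bar>" "0 \<le> \<bar>c'\<bar>" by auto
  have "max (\<Sum>l<k. a (Suc l)) (max (real k * r + c - c') (Rseq a \<tau> r c k - c')) \<le> ?B"
  proof (intro max.boundedI)
    show "(\<Sum>l<k. a (Suc l)) \<le> ?B" using sa nn cc by linarith
    show "real k * r + c - c' \<le> ?B" using kr kc nn cc by linarith
    show "Rseq a \<tau> r c k - c' \<le> ?B" using Rseq_abs[of a \<tau> r c k] cc by linarith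
  qed
  then have "N \<le> ?B" "- N \<le> ?B" using assms sa nn cc by linarith+
  then show ?thesis by (simp add: abs_le_iff)
qed

theorem lemma3:
  fixes M :: "'a measure" and n :: nat
    and \<alpha> :: "nat \<Rightarrow> 'a \<Rightarrow> real"
    and T :: "nat \<Rightarrow> nat \<Rightarrow> 'a \<Rightarrow> ereal"
    and D :: "nat \<Rightarrow> nat \<Rightarrow> real"
  assumes "prob_space M"
    and "n \<ge> 1"
    and indep: "prob_space.indep_vars M
           (\<lambda>_. borel \<Otimes>\<^sub>M PiM {..<n} (\<lambda>_. (borel :: ereal measure)))
           (\<lambda>k \<omega>. (\<alpha> k \<omega>, \<lambda>j\<in>{..<n}. T k j \<omega>)) {1..}"
    and ident: "\<And>k. k \<ge> 1 \<Longrightarrow>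
           distr M (borel \<Otimes>\<^sub>M PiM {..<n} (\<lambda>_. (borel :: ereal measure)))
                 (\<lambda>\<omega>. (\<alpha> k \<omega>, \<lambda>j\<in>{..<n}. T k j \<omega>))
         = distr M (borel \<Otimes>\<^sub>M PiM {..<n} (\<lambda>_. (borel :: ereal measure)))
                 (\<lambda>\<omega>. (\<alpha> 1 \<omega>, \<lambda>j\<in>{..<n}. T 1 j \<omega>))"
    and T_not_pinf: "\<And>k j \<omega>. k \<ge> 1 \<Longrightarrow> j < n \<Longrightarrow> \<omega> \<in> space M \<Longrightarrow> T k j \<omega> \<noteq> \<infinity>"
    and Tnorm_real: "\<And>k \<omega>. k \<ge> 1 \<Longrightarrow> \<omega> \<in> space M \<Longrightarrow>
           Max ((\<lambda>j. T k j \<omega>) ` {..<n}) \<noteq> -\<infinity>"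
    and alpha_int: "integrable M (\<alpha> 1)"
    and alpha_var: "integrable M (\<lambda>\<omega>. (\<alpha> 1 \<omega>)\<^sup>2)"
    and Tnorm_int: "integrable M (\<lambda>\<omega>. real_of_ereal (Max ((\<lambda>j. T 1 j \<omega>) ` {..<n})))"
    and Tnorm_var: "integrable M (\<lambda>\<omega>. (real_of_ereal (Max ((\<lambda>j. T 1 j \<omega>) ` {..<n})))\<^sup>2)"
    and Tnorm_nonneg: "(\<integral>\<omega>. real_of_ereal (Max ((\<lambda>j. T 1 j \<omega>) ` {..<n})) \<partial>M) \<ge> 0"
    and mu1_nonneg: "(\<integral>\<omega>. \<alpha> 1 \<omega> \<partial>M) \<ge> 0"
    and mu2_pos: "mp_rho n (\<lambda>i j. ereal (D i j)) > 0"
  shows "(AE \<omega> in M.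
            (\<lambda>k. real_of_ereal (mp_norm (Suc n)
                     (mp_prod (Suc n) (\<lambda>k. Amat n D (\<alpha> k \<omega>) (\<lambda>j. T k j \<omega>)) k)) / real k)
            \<longlonglongrightarrow> max (\<integral>\<omega>. \<alpha> 1 \<omega> \<partial>M) (real_of_ereal (mp_rho n (\<lambda>i j. ereal (D i j)))))
       \<and> (\<forall>k. integrable M (\<lambda>\<omega>. real_of_ereal (mp_norm (Suc n)
                     (mp_prod (Suc n) (\<lambda>k. Amat n D (\<alpha> k \<omega>) (\<lambda>j. T k j \<omega>)) k))))
       \<and> (\<lambda>k. (\<integral>\<omega>. real_of_ereal (mp_norm (Suc n)
                     (mp_prod (Suc n) (\<lambda>k. Amat n D (\<alpha> k \<omega>) (\<lambda>j. T k j \<omega>)) k)) \<partial>M) / real k)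
            \<longlonglongrightarrow> max (\<integral>\<omega>. \<alpha> 1 \<omega> \<partial>M) (real_of_ereal (mp_rho n (\<lambda>i j. ereal (D i j))))"
  
proof -
  interpret prob_space M by fact
  define N where "N = (borel :: real measure) \<Otimes>\<^sub>M PiM {..<n} (\<lambda>_. (borel :: ereal measure))"
  define Xv where "Xv = (\<lambda>k \<omega>. (\<alpha> k \<omega>, \<lambda>j\<in>{..<n}. T k j \<omega>))"
  have indep': "indep_vars (\<lambda>_. N) Xv {1..}" using indep unfolding N_def Xv_def .
  have ident': "\<And>k. k \<ge> 1 \<Longrightarrow> distr M N (Xv k) = distr M N (Xv 1)" using ident unfolding N_def Xv_def by blast
  have measX: "Xv k \<in> measurable M N" if "k \<ge> 1" for k
    using indep' that unfolding indep_vars_def by auto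
  have measa: "(\<lambda>\<omega>. \<alpha> k \<omega>) \<in> borel_measurable M" if "k \<ge> 1" for k
    using measurable_compose[OF measX[OF that, unfolded N_def] measurable_fst] unfolding Xv_def by simp
  have measT: "(\<lambda>\<omega>. T k j \<omega>) \<in> borel_measurable M" if "k \<ge> 1" "j < n" for k j
  proof -
    have "(\<lambda>\<omega>. snd (Xv k \<omega>)) \<in> measurable M (PiM {..<n} (\<lambda>_. (borel :: ereal measure)))"
      using measurable_compose[OF measX[OF that(1), unfolded N_def] measurable_snd] by simp
    from measurable_compose[OF this measurable_component_singleton[of j]]
    show ?thesis using that unfolding Xv_def by simp
  qed
  define f\<tau> where "f\<tau> y = real_of_ereal (Max ((\<lambda>j. snd y j) ` {..<n}))" for y :: "real \<times> (nat \<Rightarrow> ereal)"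
  have measf\<tau>[measurable]: "f\<tau> \<in> borel_measurable N"
  proof -
    have "(\<lambda>y. snd y j) \<in> borel_measurable N" if "j \<in> {..<n}" for j
      using measurable_compose[OF measurable_snd[of "borel :: real measure" "PiM {..<n} (\<lambda>_. (borel :: ereal measure))"] measurable_component_singleton[OF that, of "\<lambda>_. (borel :: ereal measure)"]]
      unfolding N_def by simp
    then show ?thesis unfolding f\<tau>_def by measurable
  qed
  have measfst[measurable]: "fst \<in> borel_measurable N" unfolding N_def by simp
  define \<tau> where "\<tau> l \<omega> = (if l = 0 then 0 else f\<tau> (Xv l \<omega>))" for l \<omega>
  have \<tau>eq: "f\<tau> (Xv l \<omega>) = real_of_ereal (Max ((\<lambda>j. T l j \<omega>) ` {..<n}))" for l \<omega>
    unfolding f\<tau>_def Xv_def snd_conv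
    by (rule arg_cong[where f="\<lambda>A. real_of_ereal (Max A)"], rule image_cong) auto
  have n0: "{..<n} \<noteq> {}" using \<open>n \<ge> 1\<close> by (simp add: ne_lt)
  have Tle: "T k j \<omega> \<le> ereal (\<tau> k \<omega>)" if "\<omega> \<in> space M" "k \<ge> 1" "j < n" for k j \<omega>
  proof -
    have "Max ((\<lambda>j. T k j \<omega>) ` {..<n}) \<in> (\<lambda>j. T k j \<omega>) ` {..<n}" by (rule Max_in) (use n0 in auto)
    then have "Max ((\<lambda>j. T k j \<omega>) ` {..<n}) \<noteq> \<infinity>" using T_not_pinf that by (metis (no_types, lifting) imageE lessThan_iff)
    moreover have "Max ((\<lambda>j. T k j \<omega>) ` {..<n}) \<noteq> -\<infinity>" using Tnorm_real that by auto
    ultimately have "Max ((\<lambda>j. T k j \<omega>) ` {..<n}) = ereal (\<tau> k \<omega>)"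
      unfolding \<tau>_def \<tau>eq using that by (cases "Max ((\<lambda>j. T k j \<omega>) ` {..<n})") auto
    moreover have "T k j \<omega> \<le> Max ((\<lambda>j. T k j \<omega>) ` {..<n})" using that by (intro Max_ge) auto
    ultimately show ?thesis by simp
  qed
  obtain C0 c c' where DF: "\<And>a t \<tau>. (\<forall>k\<ge>(1::nat). \<forall>j<n. t k j \<noteq> \<infinity> \<and> t k j \<le> ereal (\<tau> k)) \<Longrightarrow> (\<forall>k\<ge>(1::nat).
     mp_norm (Suc n) (mp_prod (Suc n) (\<lambda>k. Amat n D (a k) (t k)) k) = ereal (mpN n D a t k) \<and>
     (\<Sum>l<k. a (Suc l)) \<le> mpN n D a t k \<and>
     real k * rhor n D - C0 \<le> mpN n D a t k \<and>
     mpN n D a t k \<le> max (\<Sum>l<k. a (Suc l)) (max (real k * rhor n D + c - c') (Rseq a \<tau> (rhor n D) c k - c')))"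
    using det_final[OF \<open>n \<ge> 1\<close>, of D] by blast
  define Nk where "Nk k \<omega> = mpN n D (\<lambda>k. \<alpha> k \<omega>) (\<lambda>k j. T k j \<omega>) k" for k \<omega>
  define r where "r = rhor n D"
  have rho: "real_of_ereal (mp_rho n (\<lambda>i j. ereal (D i j))) = r" unfolding r_def using mp_rho_eq[OF \<open>n \<ge> 1\<close>] by simp
  have r0: "r > 0" using mu2_pos unfolding r_def mp_rho_eq[OF \<open>n \<ge> 1\<close>] by simp
  have Nk_eq: "real_of_ereal (mp_norm (Suc n) (mp_prod (Suc n) (\<lambda>k. Amat n D (\<alpha> k \<omega>) (\<lambda>j. T k j \<omega>)) k)) = Nk k \<omega>" for k \<omega>
    unfolding Nk_def mpN_def by simp
  have HH: "(\<Sum>l<k. \<alpha> (Suc l) \<omega>) \<le> Nk k \<omega> \<and> real k * r - C0 \<le> Nk k \<omega> \<and>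
      Nk k \<omega> \<le> max (\<Sum>l<k. \<alpha> (Suc l) \<omega>) (max (real k * r + c - c') (Rseq (\<lambda>k. \<alpha> k \<omega>) (\<lambda>k. \<tau> k \<omega>) r c k - c'))"
    if "\<omega> \<in> space M" "k \<ge> 1" for \<omega> k
  proof -
    have "\<forall>k\<ge>(1::nat). \<forall>j<n. T k j \<omega> \<noteq> \<infinity> \<and> T k j \<omega> \<le> ereal (\<tau> k \<omega>)"
      using T_not_pinf Tle that by auto
    from DF[of "\<lambda>k j. T k j \<omega>" "\<lambda>k. \<tau> k \<omega>" "\<lambda>k. \<alpha> k \<omega>", OF this] that show ?thesis unfolding Nk_def r_def by blast
  qed
  have trans: "integrable M (\<lambda>\<omega>. g (Xv l \<omega>)) \<and> (\<integral>\<omega>. g (Xv l \<omega>) \<partial>M) = (\<integral>\<omega>. g (Xv 1 \<omega>) \<partial>M)"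
    if "g \<in> borel_measurable N" "integrable M (\<lambda>\<omega>. g (Xv 1 \<omega>))" "l \<ge> 1" for g :: "_ \<Rightarrow> real" and l
    using ident_transfer[OF measX[of l] measX[of 1] ident'[of l] that(1)] that by auto
  have fst_eq: "fst (Xv l \<omega>) = \<alpha> l \<omega>" for l \<omega> unfolding Xv_def by simp
  have sq_a: "integrable M (\<lambda>\<omega>. (fst (Xv 1 \<omega>))^2)" using alpha_var unfolding fst_eq .
  have sq_t: "integrable M (\<lambda>\<omega>. (f\<tau> (Xv 1 \<omega>))^2)" using Tnorm_var unfolding \<tau>eq .
  have sq_aa: "integrable M (\<lambda>\<omega>. (\<bar>fst (Xv 1 \<omega>)\<bar>)^2)" using sq_a by simp
  have sq_ta: "integrable M (\<lambda>\<omega>. (\<bar>f\<tau> (Xv 1 \<omega>)\<bar>)^2)" using sq_t by simp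
  have L1: "AE \<omega> in M. (\<lambda>k. (\<Sum>l<k. fst (Xv (Suc l) \<omega>)) / real k) \<longlonglongrightarrow> expectation (\<lambda>\<omega>. fst (Xv 1 \<omega>))"
    by (rule slln[OF indep' _ measfst sq_a]) (rule ident')
  have L2: "AE \<omega> in M. (\<lambda>k. (\<Sum>l<k. f\<tau> (Xv (Suc l) \<omega>)) / real k) \<longlonglongrightarrow> expectation (\<lambda>\<omega>. f\<tau> (Xv 1 \<omega>))"
    by (rule slln[OF indep' _ measf\<tau> sq_t]) (rule ident')
  have L3: "AE \<omega> in M. (\<lambda>k. (\<Sum>l<k. \<bar>fst (Xv (Suc l) \<omega>)\<bar>) / real k) \<longlonglongrightarrow> expectation (\<lambda>\<omega>. \<bar>fst (Xv 1 \<omega>)\<bar>)"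
    by (rule slln[OF indep' _ _ sq_aa]) (rule ident', measurable)
  have L4: "AE \<omega> in M. (\<lambda>k. (\<Sum>l<k. \<bar>f\<tau> (Xv (Suc l) \<omega>)\<bar>) / real k) \<longlonglongrightarrow> expectation (\<lambda>\<omega>. \<bar>f\<tau> (Xv 1 \<omega>)\<bar>)"
    by (rule slln[OF indep' _ _ sq_ta]) (rule ident', measurable)
  define \<mu>1 where "\<mu>1 = (\<integral>\<omega>. \<alpha> 1 \<omega> \<partial>M)"
  have Efst: "expectation (\<lambda>\<omega>. fst (Xv 1 \<omega>)) = \<mu>1" unfolding fst_eq \<mu>1_def ..
  have AE1: "AE \<omega> in M. (\<lambda>k. Nk k \<omega> / real k) \<longlonglongrightarrow> max \<mu>1 r"
    using L1 L2 AE_space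
  proof eventually_elim
    case (elim \<omega>)
    have S: "(\<lambda>k. (\<Sum>l<k. \<alpha> (Suc l) \<omega>) / real k) \<longlonglongrightarrow> \<mu>1"
      using elim(1) unfolding Efst unfolding fst_eq .
    define s where "s k = (\<Sum>l<k. \<tau> (Suc l) \<omega>)" for k
    define \<nu> where "\<nu> = expectation (\<lambda>\<omega>. f\<tau> (Xv 1 \<omega>))"
    have s: "(\<lambda>k. s k / real k) \<longlonglongrightarrow> \<nu>" using elim(2) unfolding s_def \<nu>_def \<tau>_def by simp
    have id: "\<tau> (Suc k) \<omega> / real (Suc k) = s (Suc k) / real (Suc k) - (real k / real (Suc k)) * (s k / real k)" for k
    proof (cases "k = 0")
      case True then show ?thesis by (simp add: s_def)
    next
      case False
      then have "(real k / real (Suc k)) * (s k / real k) = s k / real (Suc k)" by simp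
      then show ?thesis by (simp add: s_def diff_divide_distrib[symmetric])
    qed
    have "(\<lambda>k. s (Suc k) / real (Suc k) - (real k / real (Suc k)) * (s k / real k)) \<longlonglongrightarrow> \<nu> - 1 * \<nu>"
      by (intro tendsto_intros LIMSEQ_n_over_Suc_n s LIMSEQ_Suc[OF s])
    then have "(\<lambda>k. \<tau> (Suc k) \<omega> / real (Suc k)) \<longlonglongrightarrow> 0" unfolding id by simp
    then have T: "(\<lambda>k. \<tau> k \<omega> / real k) \<longlonglongrightarrow> 0" by (rule LIMSEQ_imp_Suc)
    have H: "\<forall>k\<ge>1. (\<Sum>l<k. \<alpha> (Suc l) \<omega>) \<le> Nk k \<omega> \<and> real k * r - C0 \<le> Nk k \<omega> \<and>
      Nk k \<omega> \<le> max (\<Sum>l<k. \<alpha> (Suc l) \<omega>) (max (real k * r + c - c') (Rseq (\<lambda>k. \<alpha> k \<omega>) (\<lambda>k. \<tau> k \<omega>) r c k - c'))"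
      using HH elim(3) by blast
    show ?case by (rule seq_limit[OF H S T]) (use r0 in simp)
  qed
  define Ea where "Ea = expectation (\<lambda>\<omega>. \<bar>fst (Xv 1 \<omega>)\<bar>)"
  define Et where "Et = expectation (\<lambda>\<omega>. \<bar>f\<tau> (Xv 1 \<omega>)\<bar>)"
  have absa1: "integrable M (\<lambda>\<omega>. \<bar>fst (Xv 1 \<omega>)\<bar>)" using alpha_int unfolding fst_eq by simp
  have abst1: "integrable M (\<lambda>\<omega>. \<bar>f\<tau> (Xv 1 \<omega>)\<bar>)" unfolding \<tau>eq by (rule integrable_abs[OF Tnorm_int])
  have intA: "integrable M (\<lambda>\<omega>. \<bar>\<alpha> (Suc l) \<omega>\<bar>) \<and> expectation (\<lambda>\<omega>. \<bar>\<alpha> (Suc l) \<omega>\<bar>) = Ea" for l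
    using trans[of "\<lambda>y. \<bar>fst y\<bar>" "Suc l"] absa1 unfolding fst_eq Ea_def by simp
  have intT: "integrable M (\<lambda>\<omega>. \<bar>\<tau> (Suc l) \<omega>\<bar>) \<and> expectation (\<lambda>\<omega>. \<bar>\<tau> (Suc l) \<omega>\<bar>) = Et" for l
    using trans[of "\<lambda>y. \<bar>f\<tau> y\<bar>" "Suc l"] abst1 unfolding Et_def \<tau>_def by simp
  define B where "B k \<omega> = (\<Sum>l<k. \<bar>\<alpha> (Suc l) \<omega>\<bar>) + (\<Sum>l<k. \<bar>\<tau> (Suc l) \<omega>\<bar>) + real k * (\<bar>r\<bar> + \<bar>c\<bar>) + \<bar>c\<bar> + \<bar>c'\<bar>" for k \<omega>
  have intSA: "integrable M (\<lambda>\<omega>. \<Sum>l<k. \<bar>\<alpha> (Suc l) \<omega>\<bar>)" for k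
    using intA by (intro Bochner_Integration.integrable_sum) auto
  have intST: "integrable M (\<lambda>\<omega>. \<Sum>l<k. \<bar>\<tau> (Suc l) \<omega>\<bar>)" for k
    using intT by (intro Bochner_Integration.integrable_sum) auto
  have intB: "integrable M (B k)" for k
    unfolding B_def using intSA intST by simp
  have BN: "\<bar>Nk k \<omega>\<bar> \<le> B k \<omega>" if "\<omega> \<in> space M" "k \<ge> 1" for k \<omega>
    using N_abs[where k=k and a="\<lambda>k. \<alpha> k \<omega>" and N="Nk k \<omega>" and r=r and c=c and c'=c' and \<tau>="\<lambda>k. \<tau> k \<omega>"] HH[OF that] unfolding B_def by simp
  have measN: "(\<lambda>\<omega>. Nk k \<omega>) \<in> borel_measurable M" for k
    using meas_norm[where \<alpha>=\<alpha> and M=M and T=T and n=n and D=D and k=k] measa measT unfolding Nk_eq by blast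
  have intN: "integrable M (\<lambda>\<omega>. Nk k \<omega>)" for k
  proof (cases "k = 0")
    case True
    then show ?thesis by (simp add: Nk_def mpN_def)
  next
    case False
    show ?thesis
    proof (rule Bochner_Integration.integrable_bound[OF intB[of k] measN])
      show "AE \<omega> in M. norm (Nk k \<omega>) \<le> norm (B k \<omega>)"
      proof (rule AE_I2)
        fix \<omega> assume "\<omega> \<in> space M"
        then have "\<bar>Nk k \<omega>\<bar> \<le> B k \<omega>" using BN False by auto
        then show "norm (Nk k \<omega>) \<le> norm (B k \<omega>)" by simp
      qed
    qed
  qed
  define g where "g k \<omega> = (\<Sum>l<k. \<bar>\<alpha> (Suc l) \<omega>\<bar>) / real k + (\<Sum>l<k. \<bar>\<tau> (Suc l) \<omega>\<bar>) / real k
      + (\<bar>r\<bar> + \<bar>c\<bar>) + (\<bar>c\<bar> + \<bar>c'\<bar>) / real k" for k \<omega>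
  have gi: "integrable M (g k)" for k unfolding g_def using intSA intST by simp
  have fi: "integrable M (\<lambda>\<omega>. Nk k \<omega> / real k)" for k using intN by simp
  have bound: "AE \<omega> in M. \<bar>Nk k \<omega> / real k\<bar> \<le> g k \<omega>" for k
  proof (cases "k = 0")
    case True
    then show ?thesis by (intro AE_I2) (simp add: g_def)
  next
    case False
    show ?thesis
    proof (rule AE_I2)
      fix \<omega> assume \<omega>: "\<omega> \<in> space M"
      have kp: "real k > 0" using False by simp
      have "\<bar>Nk k \<omega> / real k\<bar> = \<bar>Nk k \<omega>\<bar> / real k" by (simp add: abs_div)
      also have "\<dots> \<le> B k \<omega> / real k" using BN[OF \<omega>] False kp by (intro divide_right_mono) auto
      also have "B k \<omega> / real k = g k \<omega>" unfolding B_def g_def using kp by (simp add: field_simps)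
      finally show "\<bar>Nk k \<omega> / real k\<bar> \<le> g k \<omega>" .
    qed
  qed
  have glim: "AE \<omega> in M. (\<lambda>k. g k \<omega>) \<longlonglongrightarrow> Ea + Et + (\<bar>r\<bar> + \<bar>c\<bar>) + 0"
    using L3 L4
  proof eventually_elim
    case (elim \<omega>)
    have a: "(\<lambda>k. (\<Sum>l<k. \<bar>\<alpha> (Suc l) \<omega>\<bar>) / real k) \<longlonglongrightarrow> Ea" using elim(1) unfolding fst_eq Ea_def .
    have t: "(\<lambda>k. (\<Sum>l<k. \<bar>\<tau> (Suc l) \<omega>\<bar>) / real k) \<longlonglongrightarrow> Et" using elim(2) unfolding Et_def \<tau>_def by simp
    show ?case unfolding g_def by (intro tendsto_intros a t)
  qed
  have kk: "(\<lambda>k. real k * x / real k) \<longlonglongrightarrow> x" for x :: real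
  proof (rule Lim_transform_eventually[OF tendsto_const])
    show "\<forall>\<^sub>F k in sequentially. x = real k * x / real k"
      using eventually_gt_at_top[of 0] by eventually_elim simp
  qed
  have IA: "(\<integral>\<omega>. (\<Sum>l<k. \<bar>\<alpha> (Suc l) \<omega>\<bar>) \<partial>M) = real k * Ea" for k
  proof -
    have "(\<integral>\<omega>. (\<Sum>l<k. \<bar>\<alpha> (Suc l) \<omega>\<bar>) \<partial>M) = (\<Sum>l<k. expectation (\<lambda>\<omega>. \<bar>\<alpha> (Suc l) \<omega>\<bar>))"
      using intA by (intro Bochner_Integration.integral_sum) auto
    also have "\<dots> = (\<Sum>l<k. Ea)" using intA by simp
    finally show ?thesis by simp
  qed
  have IT: "(\<integral>\<omega>. (\<Sum>l<k. \<bar>\<tau> (Suc l) \<omega>\<bar>) \<partial>M) = real k * Et" for k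
  proof -
    have "(\<integral>\<omega>. (\<Sum>l<k. \<bar>\<tau> (Suc l) \<omega>\<bar>) \<partial>M) = (\<Sum>l<k. expectation (\<lambda>\<omega>. \<bar>\<tau> (Suc l) \<omega>\<bar>))"
      using intT by (intro Bochner_Integration.integral_sum) auto
    also have "\<dots> = (\<Sum>l<k. Et)" using intT by simp
    finally show ?thesis by simp
  qed
  have Ig: "(\<integral>\<omega>. g k \<omega> \<partial>M) = real k * Ea / real k + real k * Et / real k + (\<bar>r\<bar> + \<bar>c\<bar>) + (\<bar>c\<bar> + \<bar>c'\<bar>) / real k" for k
    unfolding g_def using intSA intST IA IT by (simp add: prob_space)
  have gint: "(\<lambda>k. \<integral>\<omega>. g k \<omega> \<partial>M) \<longlonglongrightarrow> Ea + Et + (\<bar>r\<bar> + \<bar>c\<bar>) + 0"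
    unfolding Ig by (intro tendsto_intros kk)
  have conv3: "(\<lambda>k. \<integral>\<omega>. Nk k \<omega> / real k \<partial>M) \<longlonglongrightarrow> max \<mu>1 r"
    by (rule gdct[OF fi gi bound AE1 glim gint])
  show ?thesis
    unfolding Nk_eq rho \<mu>1_def[symmetric]
    using AE1 intN conv3 by simp
qed

end
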